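(* Let $0\le k<n$ and let $\Phi:\mathfrak{B}([n])^{op}\to\mathbf{Gpd}$ be a contravariant functor. Consider the forgetful (restriction) functor $\gamma_k:\operatorname{2lim}_{\mathfrak{B}([n])}\Phi\to\operatorname{2lim}_{\mathfrak{B}([n],k)}\Phi$. Then: (i) $\gamma_k$ is faithful; (ii) if $k\le n-2$, $\gamma_k$ is full and faithful; (iii) if $k\le n-3$, $\gamma_k$ is an equivalence of categories.
   Context: $[n]=\{1,\dots,n\}$; $\mathfrak{B}([n])$ is the poset of proper subsets of $[n]$ ordered by inclusion, and $\mathfrak{B}([n],k)$ is the subposet of proper subsets $S\subsetneq[n]$ with $|S|\ge k$; $\Phi$ on $\mathfrak{B}([n],k)$ denotes the restriction. For $U\subseteq V$, $\Phi_{U,V}:\Phi(V)\to\Phi(U)$. For a functor $\Psi:I^{op}\to\mathbf{Gpd}$ on a poset, the 2-limit $\operatorname{2lim}\Psi$ is the groupoid whose objects are families $(a_U,\alpha_{U,V})$ with $a_U\in\Psi(U)$ and isomorphisms $\alpha_{U,V}:\Psi_{U,V}(a_V)\to a_U$ for $U\le V$ satisfying $\alpha_{U,U}=\mathrm{id}$ and $\alpha_{U,W}=\alpha_{U,V}\circ\Psi_{U,V}(\alpha_{V,W})$ for $U\le V\le W$, and whose morphisms are families $g_U:a_U\to b_U$ with $g_U\circ\alpha_{U,V}=\beta_{U,V}\circ\Psi_{U,V}(g_V)$. *)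

theory Defs
  imports Main
begin

record ('o,'m) gcat =
  Ob   :: "'o set"
  Hom  :: "'o \<Rightarrow> 'o \<Rightarrow> 'm set"
  Comp :: "'m \<Rightarrow> 'm \<Rightarrow> 'm"   (* Comp C g f = g after f *)
  Id   :: "'o \<Rightarrow> 'm"

definition category :: "('o,'m) gcat \<Rightarrow> bool" where
  "category C \<longleftrightarrow>
     (\<forall>x y. Hom C x y \<noteq> {} \<longrightarrow> x \<in> Ob C \<and> y \<in> Ob C) \<and>
     (\<forall>x\<in>Ob C. Id C x \<in> Hom C x x) \<and>
     (\<forall>x y z f g. f \<in> Hom C x y \<and> g \<in> Hom C y z \<longrightarrow> Comp C g f \<in> Hom C x z) \<and>
     (\<forall>x y f. f \<in> Hom C x y \<longrightarrow> Comp C f (Id C x) = f \<and> Comp C (Id C y) f = f) \<and>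
     (\<forall>w x y z f g h. f \<in> Hom C w x \<and> g \<in> Hom C x y \<and> h \<in> Hom C y z \<longrightarrow>
        Comp C h (Comp C g f) = Comp C (Comp C h g) f)"

definition iso :: "('o,'m) gcat \<Rightarrow> 'o \<Rightarrow> 'o \<Rightarrow> 'm \<Rightarrow> bool" where
  "iso C x y f \<longleftrightarrow> f \<in> Hom C x y \<and>
     (\<exists>g\<in>Hom C y x. Comp C g f = Id C x \<and> Comp C f g = Id C y)"

definition groupoid :: "('o,'m) gcat \<Rightarrow> bool" where
  "groupoid C \<longleftrightarrow> category C \<and> (\<forall>x y f. f \<in> Hom C x y \<longrightarrow> iso C x y f)"

definition is_functor ::
  "('o,'m) gcat \<Rightarrow> ('p,'n) gcat \<Rightarrow> ('o \<Rightarrow> 'p) \<Rightarrow> ('m \<Rightarrow> 'n) \<Rightarrow> bool" where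
  "is_functor C D FO FM \<longleftrightarrow>
     (\<forall>x\<in>Ob C. FO x \<in> Ob D) \<and>
     (\<forall>x y f. f \<in> Hom C x y \<longrightarrow> FM f \<in> Hom D (FO x) (FO y)) \<and>
     (\<forall>x\<in>Ob C. FM (Id C x) = Id D (FO x)) \<and>
     (\<forall>x y z f g. f \<in> Hom C x y \<and> g \<in> Hom C y z \<longrightarrow> FM (Comp C g f) = Comp D (FM g) (FM f))"

definition faithful ::
  "('o,'m) gcat \<Rightarrow> ('p,'n) gcat \<Rightarrow> ('o \<Rightarrow> 'p) \<Rightarrow> ('m \<Rightarrow> 'n) \<Rightarrow> bool" where
  "faithful C D FO FM \<longleftrightarrow> is_functor C D FO FM \<and>
     (\<forall>x y f g. f \<in> Hom C x y \<and> g \<in> Hom C x y \<and> FM f = FM g \<longrightarrow> f = g)"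

definition full ::
  "('o,'m) gcat \<Rightarrow> ('p,'n) gcat \<Rightarrow> ('o \<Rightarrow> 'p) \<Rightarrow> ('m \<Rightarrow> 'n) \<Rightarrow> bool" where
  "full C D FO FM \<longleftrightarrow> is_functor C D FO FM \<and>
     (\<forall>x\<in>Ob C. \<forall>y\<in>Ob C. \<forall>h\<in>Hom D (FO x) (FO y). \<exists>f\<in>Hom C x y. FM f = h)"

definition nat_iso ::
  "('o,'m) gcat \<Rightarrow> ('p,'n) gcat \<Rightarrow> ('o \<Rightarrow> 'p) \<Rightarrow> ('m \<Rightarrow> 'n) \<Rightarrow> ('o \<Rightarrow> 'p) \<Rightarrow> ('m \<Rightarrow> 'n)
     \<Rightarrow> ('o \<Rightarrow> 'n) \<Rightarrow> bool" where
  "nat_iso C D F1O F1M F2O F2M eta \<longleftrightarrow>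
     (\<forall>x\<in>Ob C. iso D (F1O x) (F2O x) (eta x)) \<and>
     (\<forall>x y f. f \<in> Hom C x y \<longrightarrow> Comp D (eta y) (F1M f) = Comp D (F2M f) (eta x))"

definition equivalence ::
  "('o,'m) gcat \<Rightarrow> ('p,'n) gcat \<Rightarrow> ('o \<Rightarrow> 'p) \<Rightarrow> ('m \<Rightarrow> 'n) \<Rightarrow> bool" where
  "equivalence C D FO FM \<longleftrightarrow> is_functor C D FO FM \<and>
     (\<exists>GO GM eta eps. is_functor D C GO GM \<and>
        nat_iso C C id id (GO \<circ> FO) (GM \<circ> FM) eta \<and>
        nat_iso D D (FO \<circ> GO) (FM \<circ> GM) id id eps)"

text \<open>A (strict) functor I^op -> Gpd, I a set of sets ordered by inclusion.
  PO U V, PM U V are the object and morphism parts of Phi_{U,V} : Phi V -> Phi U.\<close>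
definition gpd_diagram ::
  "'i set set \<Rightarrow> ('i set \<Rightarrow> ('o,'m) gcat) \<Rightarrow> ('i set \<Rightarrow> 'i set \<Rightarrow> 'o \<Rightarrow> 'o)
     \<Rightarrow> ('i set \<Rightarrow> 'i set \<Rightarrow> 'm \<Rightarrow> 'm) \<Rightarrow> bool" where
  "gpd_diagram I Phi PO PM \<longleftrightarrow>
     (\<forall>U\<in>I. groupoid (Phi U)) \<and>
     (\<forall>U\<in>I. \<forall>V\<in>I. U \<subseteq> V \<longrightarrow> is_functor (Phi V) (Phi U) (PO U V) (PM U V)) \<and>
     (\<forall>U\<in>I. (\<forall>x\<in>Ob (Phi U). PO U U x = x) \<and> (\<forall>x y f. f \<in> Hom (Phi U) x y \<longrightarrow> PM U U f = f)) \<and>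
     (\<forall>U\<in>I. \<forall>V\<in>I. \<forall>W\<in>I. U \<subseteq> V \<and> V \<subseteq> W \<longrightarrow>
        (\<forall>x\<in>Ob (Phi W). PO U V (PO V W x) = PO U W x) \<and>
        (\<forall>x y f. f \<in> Hom (Phi W) x y \<longrightarrow> PM U V (PM V W f) = PM U W f))"

text \<open>The 2-limit groupoid. Objects are pairs (a, alpha), morphisms families g;
  all families are extensional (undefined outside the index poset).\<close>
definition twolim ::
  "'i set set \<Rightarrow> ('i set \<Rightarrow> ('o,'m) gcat) \<Rightarrow> ('i set \<Rightarrow> 'i set \<Rightarrow> 'o \<Rightarrow> 'o)
     \<Rightarrow> ('i set \<Rightarrow> 'i set \<Rightarrow> 'm \<Rightarrow> 'm)
     \<Rightarrow> (('i set \<Rightarrow> 'o) \<times> ('i set \<Rightarrow> 'i set \<Rightarrow> 'm), 'i set \<Rightarrow> 'm) gcat" where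
  "twolim I Phi PO PM =
    (let obs = {(a, al).
           (\<forall>U\<in>I. a U \<in> Ob (Phi U)) \<and> (\<forall>U. U \<notin> I \<longrightarrow> a U = undefined) \<and>
           (\<forall>U\<in>I. \<forall>V\<in>I. U \<subseteq> V \<longrightarrow> al U V \<in> Hom (Phi U) (PO U V (a V)) (a U)) \<and>
           (\<forall>U V. \<not> (U \<in> I \<and> V \<in> I \<and> U \<subseteq> V) \<longrightarrow> al U V = undefined) \<and>
           (\<forall>U\<in>I. al U U = Id (Phi U) (a U)) \<and>
           (\<forall>U\<in>I. \<forall>V\<in>I. \<forall>W\<in>I. U \<subseteq> V \<and> V \<subseteq> W \<longrightarrow>
              al U W = Comp (Phi U) (al U V) (PM U V (al V W)))}
     in \<lparr> Ob = obs,
          Hom = (\<lambda>A B. {g. A \<in> obs \<and> B \<in> obs \<and>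
                   (\<forall>U\<in>I. g U \<in> Hom (Phi U) (fst A U) (fst B U)) \<and>
                   (\<forall>U. U \<notin> I \<longrightarrow> g U = undefined) \<and>
                   (\<forall>U\<in>I. \<forall>V\<in>I. U \<subseteq> V \<longrightarrow>
                      Comp (Phi U) (g U) (snd A U V) = Comp (Phi U) (snd B U V) (PM U V (g V)))}),
          Comp = (\<lambda>g f U. if U \<in> I then Comp (Phi U) (g U) (f U) else undefined),
          Id = (\<lambda>A U. if U \<in> I then Id (Phi U) (fst A U) else undefined) \<rparr>)"

definition resO :: "'i set set \<Rightarrow> ('i set \<Rightarrow> 'o) \<times> ('i set \<Rightarrow> 'i set \<Rightarrow> 'm)
                      \<Rightarrow> ('i set \<Rightarrow> 'o) \<times> ('i set \<Rightarrow> 'i set \<Rightarrow> 'm)" where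
  "resO J A = ((\<lambda>U. if U \<in> J then fst A U else undefined),
               (\<lambda>U V. if U \<in> J \<and> V \<in> J \<and> U \<subseteq> V then snd A U V else undefined))"

definition resM :: "'i set set \<Rightarrow> ('i set \<Rightarrow> 'm) \<Rightarrow> ('i set \<Rightarrow> 'm)" where
  "resM J g = (\<lambda>U. if U \<in> J then g U else undefined)"

definition Bposet :: "nat \<Rightarrow> nat set set" where
  "Bposet n = {S. S \<subset> {1..n}}"

definition Bposet_k :: "nat \<Rightarrow> nat \<Rightarrow> nat set set" where
  "Bposet_k n k = {S. S \<subset> {1..n} \<and> k \<le> card S}"

end

theory Submission
  imports Defs
begin


lemma cat_comp: "category C \<Longrightarrow> f \<in> Hom C x y \<Longrightarrow> g \<in> Hom C y z \<Longrightarrow> Comp C g f \<in> Hom C x z"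
  unfolding category_def by blast
lemma cat_assoc: "category C \<Longrightarrow> f \<in> Hom C w x \<Longrightarrow> g \<in> Hom C x y \<Longrightarrow> h \<in> Hom C y z \<Longrightarrow>
   Comp C h (Comp C g f) = Comp C (Comp C h g) f"
  unfolding category_def by blast
lemma cat_idl: "category C \<Longrightarrow> f \<in> Hom C x y \<Longrightarrow> Comp C (Id C y) f = f"
  unfolding category_def by blast
lemma cat_idr: "category C \<Longrightarrow> f \<in> Hom C x y \<Longrightarrow> Comp C f (Id C x) = f"
  unfolding category_def by blast
lemma cat_id: "category C \<Longrightarrow> x \<in> Ob C \<Longrightarrow> Id C x \<in> Hom C x x"
  unfolding category_def by blast
lemma cat_ob: "category C \<Longrightarrow> f \<in> Hom C x y \<Longrightarrow> x \<in> Ob C \<and> y \<in> Ob C"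
  unfolding category_def by blast

definition ginv :: "('o,'m) gcat \<Rightarrow> 'o \<Rightarrow> 'o \<Rightarrow> 'm \<Rightarrow> 'm" where
  "ginv C x y f = (SOME g. g \<in> Hom C y x \<and> Comp C g f = Id C x \<and> Comp C f g = Id C y)"

lemma gcat: "groupoid C \<Longrightarrow> category C" unfolding groupoid_def by blast

lemma ginv: assumes "groupoid C" "f \<in> Hom C x y"
  shows "ginv C x y f \<in> Hom C y x \<and> Comp C (ginv C x y f) f = Id C x \<and> Comp C f (ginv C x y f) = Id C y"
proof -
  have "\<exists>g. g \<in> Hom C y x \<and> Comp C g f = Id C x \<and> Comp C f g = Id C y"
    using assms unfolding groupoid_def iso_def by blast
  then show ?thesis unfolding ginv_def by (rule someI_ex)
qed

lemma ginv_hom: "groupoid C \<Longrightarrow> f \<in> Hom C x y \<Longrightarrow> ginv C x y f \<in> Hom C y x"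
  by (simp add: ginv)
lemma ginv_l: "groupoid C \<Longrightarrow> f \<in> Hom C x y \<Longrightarrow> Comp C (ginv C x y f) f = Id C x"
  by (simp add: ginv)
lemma ginv_r: "groupoid C \<Longrightarrow> f \<in> Hom C x y \<Longrightarrow> Comp C f (ginv C x y f) = Id C y"
  by (simp add: ginv)

lemma ginv_unique: assumes G: "groupoid C" and f: "f \<in> Hom C x y" and g: "g \<in> Hom C y x"
  and e: "Comp C g f = Id C x" shows "ginv C x y f = g"
proof -
  have c: "category C" using G gcat by blast
  let ?i = "ginv C x y f"
  have i: "?i \<in> Hom C y x" using ginv_hom[OF G f] .
  have "g = Comp C g (Id C y)" using cat_idr[OF c g] by simp
  also have "\<dots> = Comp C g (Comp C f ?i)" using ginv_r[OF G f] by simp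
  also have "\<dots> = Comp C (Comp C g f) ?i" using cat_assoc[OF c i f g] .
  also have "\<dots> = ?i" using e cat_idl[OF c i] by simp
  finally show ?thesis by simp
qed

lemma cancel_r: assumes G: "groupoid C" and f: "f \<in> Hom C x y" and g1: "g1 \<in> Hom C y z"
  and g2: "g2 \<in> Hom C y z" and e: "Comp C g1 f = Comp C g2 f" shows "g1 = g2"
proof -
  have c: "category C" using G gcat by blast
  let ?i = "ginv C x y f"
  have i: "?i \<in> Hom C y x" using ginv_hom[OF G f] .
  have "\<And>g. g \<in> Hom C y z \<Longrightarrow> g = Comp C (Comp C g f) ?i"
  proof -
    fix g assume g: "g \<in> Hom C y z"
    have "g = Comp C g (Id C y)" using cat_idr[OF c g] by simp
    also have "\<dots> = Comp C g (Comp C f ?i)" using ginv_r[OF G f] by simp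
    also have "\<dots> = Comp C (Comp C g f) ?i" using cat_assoc[OF c i f g] .
    finally show "g = Comp C (Comp C g f) ?i" .
  qed
  from this[OF g1] this[OF g2] e show ?thesis by simp
qed

lemma cancel_l: assumes G: "groupoid C" and f: "f \<in> Hom C y z" and g1: "g1 \<in> Hom C x y"
  and g2: "g2 \<in> Hom C x y" and e: "Comp C f g1 = Comp C f g2" shows "g1 = g2"
proof -
  have c: "category C" using G gcat by blast
  let ?i = "ginv C y z f"
  have i: "?i \<in> Hom C z y" using ginv_hom[OF G f] .
  have "\<And>g. g \<in> Hom C x y \<Longrightarrow> g = Comp C ?i (Comp C f g)"
  proof -
    fix g assume g: "g \<in> Hom C x y"
    have "g = Comp C (Id C y) g" using cat_idl[OF c g] by simp
    also have "\<dots> = Comp C (Comp C ?i f) g" using ginv_l[OF G f] by simp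
    also have "\<dots> = Comp C ?i (Comp C f g)" using cat_assoc[OF c g f i] by simp
    finally show "g = Comp C ?i (Comp C f g)" .
  qed
  from this[OF g1] this[OF g2] e show ?thesis by simp
qed

lemma square_inv: assumes G: "groupoid C" and p: "p \<in> Hom C x y" and r: "r \<in> Hom C x x'"
  and q: "q \<in> Hom C x' y'" and s: "s \<in> Hom C y y'" and e: "Comp C s p = Comp C q r"
  shows "Comp C (ginv C y y' s) q = Comp C p (ginv C x x' r)"
proof -
  have c: "category C" using G gcat by blast
  have si: "ginv C y y' s \<in> Hom C y' y" using ginv_hom[OF G s] .
  have ri: "ginv C x x' r \<in> Hom C x' x" using ginv_hom[OF G r] .
  have h1: "Comp C (ginv C y y' s) q \<in> Hom C x' y" using cat_comp[OF c q si] .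
  have h2: "Comp C p (ginv C x x' r) \<in> Hom C x' y" using cat_comp[OF c ri p] .
  have "Comp C s (Comp C (ginv C y y' s) q) = q"
    using cat_assoc[OF c q si s] ginv_r[OF G s] cat_idl[OF c q] by simp
  moreover have "Comp C s (Comp C p (ginv C x x' r)) = q"
  proof -
    have "Comp C s (Comp C p (ginv C x x' r)) = Comp C (Comp C s p) (ginv C x x' r)"
      using cat_assoc[OF c ri p s] .
    also have "\<dots> = Comp C (Comp C q r) (ginv C x x' r)" using e by simp
    also have "\<dots> = Comp C q (Comp C r (ginv C x x' r))" using cat_assoc[OF c ri r q] by simp
    also have "\<dots> = q" using ginv_r[OF G r] cat_idr[OF c q] by simp
    finally show ?thesis .
  qed
  ultimately show ?thesis using cancel_l[OF G s h1 h2] by simp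
qed

lemma ginv_iso: "groupoid C \<Longrightarrow> f \<in> Hom C x y \<Longrightarrow> iso C y x (ginv C x y f)"
proof -
  assume G: "groupoid C" and f: "f \<in> Hom C x y"
  from ginv[OF G f] have a: "ginv C x y f \<in> Hom C y x" and b: "Comp C (ginv C x y f) f = Id C x"
    and c: "Comp C f (ginv C x y f) = Id C y" by auto
  show ?thesis unfolding iso_def using a b c f by blast
qed

lemma fun_hom: "is_functor C D FO FM \<Longrightarrow> f \<in> Hom C x y \<Longrightarrow> FM f \<in> Hom D (FO x) (FO y)"
  unfolding is_functor_def by blast
lemma fun_comp: "is_functor C D FO FM \<Longrightarrow> f \<in> Hom C x y \<Longrightarrow> g \<in> Hom C y z \<Longrightarrow>
   FM (Comp C g f) = Comp D (FM g) (FM f)"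
  unfolding is_functor_def by blast
lemma fun_id: "is_functor C D FO FM \<Longrightarrow> x \<in> Ob C \<Longrightarrow> FM (Id C x) = Id D (FO x)"
  unfolding is_functor_def by blast
lemma fun_ob: "is_functor C D FO FM \<Longrightarrow> x \<in> Ob C \<Longrightarrow> FO x \<in> Ob D"
  unfolding is_functor_def by blast

lemma fun_ginv: assumes G: "groupoid C" and H: "groupoid D" and F: "is_functor C D FO FM"
  and f: "f \<in> Hom C x y"
  shows "FM (ginv C x y f) = ginv D (FO x) (FO y) (FM f)"
proof -
  have x: "x \<in> Ob C" using cat_ob[OF gcat[OF G] f] by blast
  have i: "ginv C x y f \<in> Hom C y x" using ginv_hom[OF G f] .
  have "Comp D (FM (ginv C x y f)) (FM f) = FM (Comp C (ginv C x y f) f)"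
    using fun_comp[OF F f i] by (rule sym)
  also have "\<dots> = FM (Id C x)" using ginv_l[OF G f] by (rule arg_cong)
  also have "\<dots> = Id D (FO x)" using fun_id[OF F x] .
  finally have e: "Comp D (FM (ginv C x y f)) (FM f) = Id D (FO x)" .
  show ?thesis using ginv_unique[OF H fun_hom[OF F f] fun_hom[OF F i] e] by (rule sym)
qed




definition tlob where
  "tlob I Phi PO PM a al \<longleftrightarrow>
           (\<forall>U\<in>I. a U \<in> Ob (Phi U)) \<and> (\<forall>U. U \<notin> I \<longrightarrow> a U = undefined) \<and>
           (\<forall>U\<in>I. \<forall>V\<in>I. U \<subseteq> V \<longrightarrow> al U V \<in> Hom (Phi U) (PO U V (a V)) (a U)) \<and>
           (\<forall>U V. \<not> (U \<in> I \<and> V \<in> I \<and> U \<subseteq> V) \<longrightarrow> al U V = undefined) \<and>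
           (\<forall>U\<in>I. al U U = Id (Phi U) (a U)) \<and>
           (\<forall>U\<in>I. \<forall>V\<in>I. \<forall>W\<in>I. U \<subseteq> V \<and> V \<subseteq> W \<longrightarrow>
              al U W = Comp (Phi U) (al U V) (PM U V (al V W)))"

lemma Ob_tl: "A \<in> Ob (twolim I Phi PO PM) \<longleftrightarrow> tlob I Phi PO PM (fst A) (snd A)"
  unfolding twolim_def Let_def tlob_def by (cases A) simp

lemma Hom_tl: "g \<in> Hom (twolim I Phi PO PM) A B \<longleftrightarrow>
   A \<in> Ob (twolim I Phi PO PM) \<and> B \<in> Ob (twolim I Phi PO PM) \<and>
   (\<forall>U\<in>I. g U \<in> Hom (Phi U) (fst A U) (fst B U)) \<and>
   (\<forall>U. U \<notin> I \<longrightarrow> g U = undefined) \<and>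
   (\<forall>U\<in>I. \<forall>V\<in>I. U \<subseteq> V \<longrightarrow>
       Comp (Phi U) (g U) (snd A U V) = Comp (Phi U) (snd B U V) (PM U V (g V)))"
  unfolding twolim_def Let_def by simp

lemma Comp_tl: "Comp (twolim I Phi PO PM) g f = (\<lambda>U. if U \<in> I then Comp (Phi U) (g U) (f U) else undefined)"
  unfolding twolim_def Let_def by simp

lemma Id_tl: "Id (twolim I Phi PO PM) A = (\<lambda>U. if U \<in> I then Id (Phi U) (fst A U) else undefined)"
  unfolding twolim_def Let_def by simp

lemma tlobD:
  assumes "tlob I Phi PO PM a al"
  shows "U \<in> I \<Longrightarrow> a U \<in> Ob (Phi U)"
    and "U \<notin> I \<Longrightarrow> a U = undefined"
    and "U \<in> I \<Longrightarrow> V \<in> I \<Longrightarrow> U \<subseteq> V \<Longrightarrow> al U V \<in> Hom (Phi U) (PO U V (a V)) (a U)"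
    and "\<not> (U \<in> I \<and> V \<in> I \<and> U \<subseteq> V) \<Longrightarrow> al U V = undefined"
    and "U \<in> I \<Longrightarrow> al U U = Id (Phi U) (a U)"
    and "U \<in> I \<Longrightarrow> V \<in> I \<Longrightarrow> W \<in> I \<Longrightarrow> U \<subseteq> V \<Longrightarrow> V \<subseteq> W \<Longrightarrow>
          al U W = Comp (Phi U) (al U V) (PM U V (al V W))"
proof -
  note a = assms[unfolded tlob_def]
  show "U \<in> I \<Longrightarrow> a U \<in> Ob (Phi U)" using a by (elim conjE) (drule bspec, assumption)
  show "U \<notin> I \<Longrightarrow> a U = undefined" using a by (elim conjE) (drule spec, erule mp)
  show "U \<in> I \<Longrightarrow> V \<in> I \<Longrightarrow> U \<subseteq> V \<Longrightarrow> al U V \<in> Hom (Phi U) (PO U V (a V)) (a U)"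
    using a by (elim conjE) (drule bspec, assumption, drule bspec, assumption, erule mp)
  show "\<not> (U \<in> I \<and> V \<in> I \<and> U \<subseteq> V) \<Longrightarrow> al U V = undefined"
    using a by (elim conjE) (drule spec, drule spec, erule mp)
  show "U \<in> I \<Longrightarrow> al U U = Id (Phi U) (a U)" using a by (elim conjE) (drule bspec, assumption)
  show "U \<in> I \<Longrightarrow> V \<in> I \<Longrightarrow> W \<in> I \<Longrightarrow> U \<subseteq> V \<Longrightarrow> V \<subseteq> W \<Longrightarrow>
          al U W = Comp (Phi U) (al U V) (PM U V (al V W))"
    using a by (elim conjE) (drule bspec, assumption, drule bspec, assumption, drule bspec, assumption, erule mp, rule conjI)
qed

lemma gdD:
  assumes "gpd_diagram I Phi PO PM"
  shows "U \<in> I \<Longrightarrow> groupoid (Phi U)"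
    and "U \<in> I \<Longrightarrow> V \<in> I \<Longrightarrow> U \<subseteq> V \<Longrightarrow> is_functor (Phi V) (Phi U) (PO U V) (PM U V)"
    and "U \<in> I \<Longrightarrow> x \<in> Ob (Phi U) \<Longrightarrow> PO U U x = x"
    and "U \<in> I \<Longrightarrow> f \<in> Hom (Phi U) x y \<Longrightarrow> PM U U f = f"
    and "U \<in> I \<Longrightarrow> V \<in> I \<Longrightarrow> W \<in> I \<Longrightarrow> U \<subseteq> V \<Longrightarrow> V \<subseteq> W \<Longrightarrow> x \<in> Ob (Phi W) \<Longrightarrow>
          PO U V (PO V W x) = PO U W x"
    and "U \<in> I \<Longrightarrow> V \<in> I \<Longrightarrow> W \<in> I \<Longrightarrow> U \<subseteq> V \<Longrightarrow> V \<subseteq> W \<Longrightarrow> f \<in> Hom (Phi W) x y \<Longrightarrow>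
          PM U V (PM V W f) = PM U W f"
proof -
  note a = assms[unfolded gpd_diagram_def]
  show "U \<in> I \<Longrightarrow> groupoid (Phi U)" using a by (elim conjE) (drule bspec, assumption)
  show "U \<in> I \<Longrightarrow> V \<in> I \<Longrightarrow> U \<subseteq> V \<Longrightarrow> is_functor (Phi V) (Phi U) (PO U V) (PM U V)"
    using a by (elim conjE) (drule bspec, assumption, drule bspec, assumption, erule mp)
  show "U \<in> I \<Longrightarrow> x \<in> Ob (Phi U) \<Longrightarrow> PO U U x = x"
    using a by (elim conjE) (drule bspec, assumption, elim conjE, drule bspec, assumption)
  show "U \<in> I \<Longrightarrow> f \<in> Hom (Phi U) x y \<Longrightarrow> PM U U f = f"
    using a by (elim conjE) (drule bspec, assumption, elim conjE, drule spec, drule spec, drule spec, erule mp)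
  show "U \<in> I \<Longrightarrow> V \<in> I \<Longrightarrow> W \<in> I \<Longrightarrow> U \<subseteq> V \<Longrightarrow> V \<subseteq> W \<Longrightarrow> x \<in> Ob (Phi W) \<Longrightarrow>
          PO U V (PO V W x) = PO U W x"
  proof -
    assume h: "U \<in> I" "V \<in> I" "W \<in> I" "U \<subseteq> V" "V \<subseteq> W" "x \<in> Ob (Phi W)"
    have t: "\<forall>U\<in>I. \<forall>V\<in>I. \<forall>W\<in>I. U \<subseteq> V \<and> V \<subseteq> W \<longrightarrow>
        (\<forall>x\<in>Ob (Phi W). PO U V (PO V W x) = PO U W x) \<and>
        (\<forall>x y f. f \<in> Hom (Phi W) x y \<longrightarrow> PM U V (PM V W f) = PM U W f)" using a by (elim conjE) assumption
    have "(\<forall>x\<in>Ob (Phi W). PO U V (PO V W x) = PO U W x)" using t h by simp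
    then show ?thesis using h by simp
  qed
  show "U \<in> I \<Longrightarrow> V \<in> I \<Longrightarrow> W \<in> I \<Longrightarrow> U \<subseteq> V \<Longrightarrow> V \<subseteq> W \<Longrightarrow> f \<in> Hom (Phi W) x y \<Longrightarrow>
          PM U V (PM V W f) = PM U W f"
  proof -
    assume h: "U \<in> I" "V \<in> I" "W \<in> I" "U \<subseteq> V" "V \<subseteq> W" "f \<in> Hom (Phi W) x y"
    have t: "\<forall>U\<in>I. \<forall>V\<in>I. \<forall>W\<in>I. U \<subseteq> V \<and> V \<subseteq> W \<longrightarrow>
        (\<forall>x\<in>Ob (Phi W). PO U V (PO V W x) = PO U W x) \<and>
        (\<forall>x y f. f \<in> Hom (Phi W) x y \<longrightarrow> PM U V (PM V W f) = PM U W f)" using a by (elim conjE) assumption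
    have "(\<forall>x y f. f \<in> Hom (Phi W) x y \<longrightarrow> PM U V (PM V W f) = PM U W f)" using t h by simp
    then show ?thesis using h by blast
  qed
qed

lemma gd_sub: "gpd_diagram I Phi PO PM \<Longrightarrow> J \<subseteq> I \<Longrightarrow> gpd_diagram J Phi PO PM"
  unfolding gpd_diagram_def by (meson subsetD)

lemma HomD:
  assumes "g \<in> Hom (twolim I Phi PO PM) A B"
  shows "A \<in> Ob (twolim I Phi PO PM)" and "B \<in> Ob (twolim I Phi PO PM)"
    and "U \<in> I \<Longrightarrow> g U \<in> Hom (Phi U) (fst A U) (fst B U)"
    and "U \<notin> I \<Longrightarrow> g U = undefined"
    and "U \<in> I \<Longrightarrow> V \<in> I \<Longrightarrow> U \<subseteq> V \<Longrightarrow>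
       Comp (Phi U) (g U) (snd A U V) = Comp (Phi U) (snd B U V) (PM U V (g V))"
proof -
  note a = assms[unfolded Hom_tl]
  show "A \<in> Ob (twolim I Phi PO PM)" using a by (elim conjE)
  show "B \<in> Ob (twolim I Phi PO PM)" using a by (elim conjE)
  show "U \<in> I \<Longrightarrow> g U \<in> Hom (Phi U) (fst A U) (fst B U)" using a by (elim conjE) (drule bspec)
  show "U \<notin> I \<Longrightarrow> g U = undefined" using a by (elim conjE) (drule spec, erule mp)
  show "U \<in> I \<Longrightarrow> V \<in> I \<Longrightarrow> U \<subseteq> V \<Longrightarrow>
       Comp (Phi U) (g U) (snd A U V) = Comp (Phi U) (snd B U V) (PM U V (g V))"
    using a by (elim conjE) (drule bspec, assumption, drule bspec, assumption, erule mp)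
qed

lemma HomI:
  assumes "A \<in> Ob (twolim I Phi PO PM)" and "B \<in> Ob (twolim I Phi PO PM)"
    and "\<And>U. U \<in> I \<Longrightarrow> g U \<in> Hom (Phi U) (fst A U) (fst B U)"
    and "\<And>U. U \<notin> I \<Longrightarrow> g U = undefined"
    and "\<And>U V. U \<in> I \<Longrightarrow> V \<in> I \<Longrightarrow> U \<subseteq> V \<Longrightarrow>
       Comp (Phi U) (g U) (snd A U V) = Comp (Phi U) (snd B U V) (PM U V (g V))"
  shows "g \<in> Hom (twolim I Phi PO PM) A B"
  unfolding Hom_tl using assms by (intro conjI ballI allI impI) auto

lemma groupoid_tl:
  assumes gd: "gpd_diagram I Phi PO PM"
  shows "groupoid (twolim I Phi PO PM)"
proof -
  let ?C = "twolim I Phi PO PM"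
  have G: "\<And>U. U \<in> I \<Longrightarrow> groupoid (Phi U)" using gdD(1)[OF gd] .
  have c: "\<And>U. U \<in> I \<Longrightarrow> category (Phi U)" using G gcat by blast
  have F: "\<And>U V. U \<in> I \<Longrightarrow> V \<in> I \<Longrightarrow> U \<subseteq> V \<Longrightarrow> is_functor (Phi V) (Phi U) (PO U V) (PM U V)"
    using gdD(2)[OF gd] .
  have ax1: "\<forall>x y. Hom ?C x y \<noteq> {} \<longrightarrow> x \<in> Ob ?C \<and> y \<in> Ob ?C"
  proof (intro allI impI)
    fix x y assume "Hom ?C x y \<noteq> {}"
    then obtain g where "g \<in> Hom ?C x y" by blast
    then show "x \<in> Ob ?C \<and> y \<in> Ob ?C" using HomD(1,2) by metis
  qed
  have ax2: "\<forall>x\<in>Ob ?C. Id ?C x \<in> Hom ?C x x"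
  proof
    fix A assume A: "A \<in> Ob ?C"
    hence t: "tlob I Phi PO PM (fst A) (snd A)" using Ob_tl by blast
    show "Id ?C A \<in> Hom ?C A A"
    proof (rule HomI[OF A A])
      fix U assume U: "U \<in> I"
      show "Id ?C A U \<in> Hom (Phi U) (fst A U) (fst A U)"
        using U cat_id[OF c[OF U] tlobD(1)[OF t U]] by (simp add: Id_tl)
    next
      fix U assume U: "U \<notin> I" show "Id ?C A U = undefined" using U by (simp add: Id_tl)
    next
      fix U V assume U: "U \<in> I" and V: "V \<in> I" and UV: "U \<subseteq> V"
      have al: "snd A U V \<in> Hom (Phi U) (PO U V (fst A V)) (fst A U)" using tlobD(3)[OF t U V UV] .
      have "PM U V (Id (Phi V) (fst A V)) = Id (Phi U) (PO U V (fst A V))"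
        using fun_id[OF F[OF U V UV] tlobD(1)[OF t V]] .
      then show "Comp (Phi U) (Id ?C A U) (snd A U V) = Comp (Phi U) (snd A U V) (PM U V (Id ?C A V))"
        using U V cat_idl[OF c[OF U] al] cat_idr[OF c[OF U] al] by (simp add: Id_tl)
    qed
  qed
  have ax3: "\<forall>x y z f g. f \<in> Hom ?C x y \<and> g \<in> Hom ?C y z \<longrightarrow> Comp ?C g f \<in> Hom ?C x z"
  proof (intro allI impI)
    fix A B D f g assume fg: "f \<in> Hom ?C A B \<and> g \<in> Hom ?C B D"
    hence f: "f \<in> Hom ?C A B" and g: "g \<in> Hom ?C B D" by auto
    have tA: "tlob I Phi PO PM (fst A) (snd A)" using HomD(1)[OF f] Ob_tl by blast
    have tB: "tlob I Phi PO PM (fst B) (snd B)" using HomD(1)[OF g] Ob_tl by blast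
    have tD: "tlob I Phi PO PM (fst D) (snd D)" using HomD(2)[OF g] Ob_tl by blast
    show "Comp ?C g f \<in> Hom ?C A D"
    proof (rule HomI[OF HomD(1)[OF f] HomD(2)[OF g]])
      fix U assume U: "U \<in> I"
      show "Comp ?C g f U \<in> Hom (Phi U) (fst A U) (fst D U)"
        using U cat_comp[OF c[OF U] HomD(3)[OF f U] HomD(3)[OF g U]] by (simp add: Comp_tl)
    next
      fix U assume U: "U \<notin> I" show "Comp ?C g f U = undefined" using U by (simp add: Comp_tl)
    next
      fix U V assume U: "U \<in> I" and V: "V \<in> I" and UV: "U \<subseteq> V"
      have fU: "f U \<in> Hom (Phi U) (fst A U) (fst B U)" using HomD(3)[OF f U] .
      have gU: "g U \<in> Hom (Phi U) (fst B U) (fst D U)" using HomD(3)[OF g U] .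
      have fV: "f V \<in> Hom (Phi V) (fst A V) (fst B V)" using HomD(3)[OF f V] .
      have gV: "g V \<in> Hom (Phi V) (fst B V) (fst D V)" using HomD(3)[OF g V] .
      have a: "snd A U V \<in> Hom (Phi U) (PO U V (fst A V)) (fst A U)" using tlobD(3)[OF tA U V UV] .
      have b: "snd B U V \<in> Hom (Phi U) (PO U V (fst B V)) (fst B U)" using tlobD(3)[OF tB U V UV] .
      have d: "snd D U V \<in> Hom (Phi U) (PO U V (fst D V)) (fst D U)" using tlobD(3)[OF tD U V UV] .
      have pf: "PM U V (f V) \<in> Hom (Phi U) (PO U V (fst A V)) (PO U V (fst B V))"
        using fun_hom[OF F[OF U V UV] fV] .
      have pg: "PM U V (g V) \<in> Hom (Phi U) (PO U V (fst B V)) (PO U V (fst D V))"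
        using fun_hom[OF F[OF U V UV] gV] .
      have nf: "Comp (Phi U) (f U) (snd A U V) = Comp (Phi U) (snd B U V) (PM U V (f V))"
        using HomD(5)[OF f U V UV] .
      have ng: "Comp (Phi U) (g U) (snd B U V) = Comp (Phi U) (snd D U V) (PM U V (g V))"
        using HomD(5)[OF g U V UV] .
      have "Comp (Phi U) (Comp (Phi U) (g U) (f U)) (snd A U V)
           = Comp (Phi U) (g U) (Comp (Phi U) (f U) (snd A U V))"
        using cat_assoc[OF c[OF U] a fU gU] by simp
      also have "\<dots> = Comp (Phi U) (g U) (Comp (Phi U) (snd B U V) (PM U V (f V)))" using nf by simp
      also have "\<dots> = Comp (Phi U) (Comp (Phi U) (g U) (snd B U V)) (PM U V (f V))"
        using cat_assoc[OF c[OF U] pf b gU] .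
      also have "\<dots> = Comp (Phi U) (Comp (Phi U) (snd D U V) (PM U V (g V))) (PM U V (f V))" using ng by simp
      also have "\<dots> = Comp (Phi U) (snd D U V) (Comp (Phi U) (PM U V (g V)) (PM U V (f V)))"
        using cat_assoc[OF c[OF U] pf pg d] by simp
      also have "\<dots> = Comp (Phi U) (snd D U V) (PM U V (Comp (Phi V) (g V) (f V)))"
        using fun_comp[OF F[OF U V UV] fV gV] by simp
      finally show "Comp (Phi U) (Comp ?C g f U) (snd A U V) =
          Comp (Phi U) (snd D U V) (PM U V (Comp ?C g f V))"
        using U V by (simp add: Comp_tl)
    qed
  qed
  have ax4: "\<forall>x y f. f \<in> Hom ?C x y \<longrightarrow> Comp ?C f (Id ?C x) = f \<and> Comp ?C (Id ?C y) f = f"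
  proof (intro allI impI conjI)
    fix A B f assume f: "f \<in> Hom ?C A B"
    show "Comp ?C f (Id ?C A) = f"
    proof (rule ext)
      fix U show "Comp ?C f (Id ?C A) U = f U"
      proof (cases "U \<in> I")
        case True then show ?thesis using cat_idr[OF c[OF True] HomD(3)[OF f True]] by (simp add: Comp_tl Id_tl)
      qed (simp add: Comp_tl Id_tl HomD(4)[OF f])
    qed
    show "Comp ?C (Id ?C B) f = f"
    proof (rule ext)
      fix U show "Comp ?C (Id ?C B) f U = f U"
      proof (cases "U \<in> I")
        case True then show ?thesis using cat_idl[OF c[OF True] HomD(3)[OF f True]] by (simp add: Comp_tl Id_tl)
      qed (simp add: Comp_tl Id_tl HomD(4)[OF f])
    qed
  qed
  have ax5: "\<forall>w x y z f g h. f \<in> Hom ?C w x \<and> g \<in> Hom ?C x y \<and> h \<in> Hom ?C y z \<longrightarrow>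
        Comp ?C h (Comp ?C g f) = Comp ?C (Comp ?C h g) f"
  proof (intro allI impI)
    fix A B D E f g h assume fgh: "f \<in> Hom ?C A B \<and> g \<in> Hom ?C B D \<and> h \<in> Hom ?C D E"
    hence f: "f \<in> Hom ?C A B" and g: "g \<in> Hom ?C B D" and h: "h \<in> Hom ?C D E" by auto
    show "Comp ?C h (Comp ?C g f) = Comp ?C (Comp ?C h g) f"
    proof (rule ext)
      fix U show "Comp ?C h (Comp ?C g f) U = Comp ?C (Comp ?C h g) f U"
      proof (cases "U \<in> I")
        case True
        then show ?thesis using cat_assoc[OF c[OF True] HomD(3)[OF f True] HomD(3)[OF g True] HomD(3)[OF h True]]
          by (simp add: Comp_tl)
      qed (simp add: Comp_tl)
    qed
  qed
  have cat: "category ?C" unfolding category_def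
    apply (intro conjI)
    apply (rule ax1) apply (rule ax2) apply (rule ax3) apply (rule ax4) apply (rule ax5) done
  have isos: "\<forall>x y f. f \<in> Hom ?C x y \<longrightarrow> iso ?C x y f"
  proof (intro allI impI)
    fix A B f assume f: "f \<in> Hom ?C A B"
    have tA: "tlob I Phi PO PM (fst A) (snd A)" using HomD(1)[OF f] Ob_tl by blast
    have tB: "tlob I Phi PO PM (fst B) (snd B)" using HomD(2)[OF f] Ob_tl by blast
    define g where "g = (\<lambda>U. if U \<in> I then ginv (Phi U) (fst A U) (fst B U) (f U) else undefined)"
    have fU: "\<And>U. U \<in> I \<Longrightarrow> f U \<in> Hom (Phi U) (fst A U) (fst B U)" using HomD(3)[OF f] .
    have g: "g \<in> Hom ?C B A"
    proof (rule HomI[OF HomD(2)[OF f] HomD(1)[OF f]])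
      fix U assume U: "U \<in> I"
      show "g U \<in> Hom (Phi U) (fst B U) (fst A U)" using U ginv_hom[OF G[OF U] fU[OF U]] g_def by simp
    next
      fix U assume U: "U \<notin> I" show "g U = undefined" using U g_def by simp
    next
      fix U V assume U: "U \<in> I" and V: "V \<in> I" and UV: "U \<subseteq> V"
      have a: "snd A U V \<in> Hom (Phi U) (PO U V (fst A V)) (fst A U)" using tlobD(3)[OF tA U V UV] .
      have b: "snd B U V \<in> Hom (Phi U) (PO U V (fst B V)) (fst B U)" using tlobD(3)[OF tB U V UV] .
      have pf: "PM U V (f V) \<in> Hom (Phi U) (PO U V (fst A V)) (PO U V (fst B V))"
        using fun_hom[OF F[OF U V UV] fU[OF V]] .
      have nf: "Comp (Phi U) (f U) (snd A U V) = Comp (Phi U) (snd B U V) (PM U V (f V))"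
        using HomD(5)[OF f U V UV] .
      have "Comp (Phi U) (ginv (Phi U) (fst A U) (fst B U) (f U)) (snd B U V) =
            Comp (Phi U) (snd A U V) (ginv (Phi U) (PO U V (fst A V)) (PO U V (fst B V)) (PM U V (f V)))"
        using square_inv[OF G[OF U] a pf b fU[OF U] nf] .
      moreover have "PM U V (ginv (Phi V) (fst A V) (fst B V) (f V)) =
           ginv (Phi U) (PO U V (fst A V)) (PO U V (fst B V)) (PM U V (f V))"
        using fun_ginv[OF G[OF V] G[OF U] F[OF U V UV] fU[OF V]] .
      ultimately show "Comp (Phi U) (g U) (snd B U V) = Comp (Phi U) (snd A U V) (PM U V (g V))"
        using U V g_def by simp
    qed
    have e1: "Comp ?C g f = Id ?C A"
    proof (rule ext)
      fix U show "Comp ?C g f U = Id ?C A U"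
        using ginv_l[OF G fU] g_def by (cases "U \<in> I") (auto simp: Comp_tl Id_tl)
    qed
    have e2: "Comp ?C f g = Id ?C B"
    proof (rule ext)
      fix U show "Comp ?C f g U = Id ?C B U"
        using ginv_r[OF G fU] g_def by (cases "U \<in> I") (auto simp: Comp_tl Id_tl)
    qed
    show "iso ?C A B f" unfolding iso_def using f g e1 e2 by (intro conjI bexI[of _ g])
  qed
  show ?thesis unfolding groupoid_def using cat isos by (intro conjI)
qed




definition Mset :: "nat \<Rightarrow> nat \<Rightarrow> nat set" where "Mset n i = {1..n} - {i}"
definition idx :: "nat \<Rightarrow> nat set \<Rightarrow> nat" where "idx n U = (SOME i. i \<in> {1..n} \<and> i \<notin> U)"

lemma B_mem: "U \<in> Bposet n \<longleftrightarrow> U \<subset> {1..n}" unfolding Bposet_def by simp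
lemma J_mem: "U \<in> Bposet_k n k \<longleftrightarrow> U \<subset> {1..n} \<and> k \<le> card U" unfolding Bposet_k_def by simp
lemma JB: "Bposet_k n k \<subseteq> Bposet n" unfolding Bposet_def Bposet_k_def by auto

lemma idx: assumes "U \<in> Bposet n" shows "idx n U \<in> {1..n}" "idx n U \<notin> U"
proof -
  have "\<exists>i. i \<in> {1..n} \<and> i \<notin> U" using assms unfolding B_mem by blast
  hence "idx n U \<in> {1..n} \<and> idx n U \<notin> U" unfolding idx_def by (rule someI_ex)
  thus "idx n U \<in> {1..n}" "idx n U \<notin> U" by auto
qed

lemma card_minus: assumes "finite S" "card S \<le> m" shows "n - m \<le> card ({1..n} - S)"
proof -
  have "card {1..n} - card S \<le> card ({1..n} - S)" using diff_card_le_card_Diff[OF assms(1)] .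
  thus ?thesis using assms(2) by simp
qed

lemma subJ: assumes "T \<subseteq> {1..n} - S" "i \<in> S" "i \<in> {1..n}" "finite S" "card S \<le> m" "k + m \<le> n"
  "T = {1..n} - S" shows "T \<in> Bposet_k n k"
  unfolding J_mem
proof
  show "T \<subset> {1..n}" using assms(1,2,3) by blast
  show "k \<le> card T" using card_minus[OF assms(4,5), of n] assms(6,7) by simp
qed

lemma M_J: assumes "k < n" "i \<in> {1..n}" shows "Mset n i \<in> Bposet_k n k"
  using subJ[where T="Mset n i" and S="{i}" and i=i and n=n and m=1 and k=k] assms unfolding Mset_def by simp

lemma M2_J: assumes "k + 2 \<le> n" "i \<in> {1..n}" shows "Mset n i \<inter> Mset n j \<in> Bposet_k n k"
proof -
  have c: "card {i,j} \<le> 2" by (simp add: card_insert_if)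
  have e: "Mset n i \<inter> Mset n j = {1..n} - {i,j}" unfolding Mset_def by auto
  show ?thesis unfolding e
    using subJ[where T="{1..n} - {i,j}" and S="{i,j}" and i=i and n=n and m=2 and k=k] assms c by auto
qed

lemma M3_J: assumes "k + 3 \<le> n" "i \<in> {1..n}" shows "Mset n i \<inter> Mset n j \<inter> Mset n l \<in> Bposet_k n k"
proof -
  have c: "card {i,j,l} \<le> 3" by (simp add: card_insert_if)
  have e: "Mset n i \<inter> Mset n j \<inter> Mset n l = {1..n} - {i,j,l}" unfolding Mset_def by auto
  show ?thesis unfolding e
    using subJ[where T="{1..n} - {i,j,l}" and S="{i,j,l}" and i=i and n=n and m=3 and k=k] assms c by auto
qed

lemma sub_M: "U \<in> Bposet n \<Longrightarrow> i \<notin> U \<Longrightarrow> U \<subseteq> Mset n i"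
  unfolding B_mem Mset_def by auto

lemma fst_resO: "fst (resO J A) = (\<lambda>U. if U \<in> J then fst A U else undefined)" unfolding resO_def by simp
lemma snd_resO: "snd (resO J A) = (\<lambda>U V. if U \<in> J \<and> V \<in> J \<and> U \<subseteq> V then snd A U V else undefined)"
  unfolding resO_def by simp

lemma res_ob: assumes gd: "gpd_diagram I Phi PO PM" and JI: "J \<subseteq> I"
  and A: "A \<in> Ob (twolim I Phi PO PM)" shows "resO J A \<in> Ob (twolim J Phi PO PM)"
proof -
  have t: "tlob I Phi PO PM (fst A) (snd A)" using A Ob_tl by blast
  have tJ: "tlob J Phi PO PM (fst (resO J A)) (snd (resO J A))"
    unfolding tlob_def fst_resO snd_resO
  proof (intro conjI ballI allI impI)
    fix U assume U: "U \<in> J"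
    show "(if U \<in> J then fst A U else undefined) \<in> Ob (Phi U)" using U JI tlobD(1)[OF t] by auto
    show "(if U \<in> J \<and> U \<in> J \<and> U \<subseteq> U then snd A U U else undefined) =
       Id (Phi U) (if U \<in> J then fst A U else undefined)" using U JI tlobD(5)[OF t] by auto
  next
    fix U V assume U: "U \<in> J" and V: "V \<in> J" and UV: "U \<subseteq> V"
    show "(if U \<in> J \<and> V \<in> J \<and> U \<subseteq> V then snd A U V else undefined)
       \<in> Hom (Phi U) (PO U V (if V \<in> J then fst A V else undefined)) (if U \<in> J then fst A U else undefined)"
    proof -
      have "U \<in> I" "V \<in> I" using U V JI by auto
      then show ?thesis using U V UV tlobD(3)[OF t] by simp
    qed
  next
    fix U V W assume U: "U \<in> J" and V: "V \<in> J" and W: "W \<in> J" and UVW: "U \<subseteq> V \<and> V \<subseteq> W"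
    have "snd A U W = Comp (Phi U) (snd A U V) (PM U V (snd A V W))"
      using tlobD(6)[OF t] U V W UVW JI by blast
    then show "(if U \<in> J \<and> W \<in> J \<and> U \<subseteq> W then snd A U W else undefined) =
       Comp (Phi U) (if U \<in> J \<and> V \<in> J \<and> U \<subseteq> V then snd A U V else undefined)
        (PM U V (if V \<in> J \<and> W \<in> J \<and> V \<subseteq> W then snd A V W else undefined))"
      using U V W UVW by auto
  qed auto
  then show ?thesis using Ob_tl by blast
qed

lemma res_functor: assumes gd: "gpd_diagram I Phi PO PM" and JI: "J \<subseteq> I"
  shows "is_functor (twolim I Phi PO PM) (twolim J Phi PO PM) (resO J) (resM J)"
proof -
  let ?C = "twolim I Phi PO PM" and ?D = "twolim J Phi PO PM"
  have ob: "\<forall>x\<in>Ob ?C. resO J x \<in> Ob ?D" using res_ob[OF gd JI] by blast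
  have hom: "\<forall>x y f. f \<in> Hom ?C x y \<longrightarrow> resM J f \<in> Hom ?D (resO J x) (resO J y)"
  proof (intro allI impI)
    fix A B f assume f: "f \<in> Hom ?C A B"
    show "resM J f \<in> Hom ?D (resO J A) (resO J B)"
    proof (rule HomI[OF res_ob[OF gd JI HomD(1)[OF f]] res_ob[OF gd JI HomD(2)[OF f]]])
      fix U assume U: "U \<in> J"
      show "resM J f U \<in> Hom (Phi U) (fst (resO J A) U) (fst (resO J B) U)"
        using U JI HomD(3)[OF f] by (auto simp: resM_def fst_resO)
    next
      fix U assume U: "U \<notin> J" show "resM J f U = undefined" using U by (simp add: resM_def)
    next
      fix U V assume U: "U \<in> J" and V: "V \<in> J" and UV: "U \<subseteq> V"
      show "Comp (Phi U) (resM J f U) (snd (resO J A) U V) = Comp (Phi U) (snd (resO J B) U V) (PM U V (resM J f V))"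
        using U V UV JI HomD(5)[OF f, of U V] by (auto simp: resM_def snd_resO)
    qed
  qed
  have idp: "\<forall>x\<in>Ob ?C. resM J (Id ?C x) = Id ?D (resO J x)"
  proof
    fix x show "resM J (Id ?C x) = Id ?D (resO J x)"
    proof (rule ext)
      fix U show "resM J (Id ?C x) U = Id ?D (resO J x) U"
        using JI by (cases "U \<in> J") (auto simp: resM_def Id_tl fst_resO)
    qed
  qed
  have cmp: "\<forall>x y z f g. f \<in> Hom ?C x y \<and> g \<in> Hom ?C y z \<longrightarrow> resM J (Comp ?C g f) = Comp ?D (resM J g) (resM J f)"
  proof (intro allI impI)
    fix x y z f g show "resM J (Comp ?C g f) = Comp ?D (resM J g) (resM J f)"
    proof (rule ext)
      fix U show "resM J (Comp ?C g f) U = Comp ?D (resM J g) (resM J f) U"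
        using JI by (cases "U \<in> J") (auto simp: resM_def Comp_tl)
    qed
  qed
  show ?thesis unfolding is_functor_def using ob hom idp cmp by (intro conjI)
qed




locale P51 =
  fixes n k :: nat and Phi :: "nat set \<Rightarrow> ('o,'m) gcat"
    and PO :: "nat set \<Rightarrow> nat set \<Rightarrow> 'o \<Rightarrow> 'o" and PM :: "nat set \<Rightarrow> nat set \<Rightarrow> 'm \<Rightarrow> 'm"
  assumes kn: "k < n" and gd: "gpd_diagram (Bposet n) Phi PO PM"
begin

abbreviation BB where "BB \<equiv> Bposet n"
abbreviation JJ where "JJ \<equiv> Bposet_k n k"
abbreviation MM where "MM i \<equiv> Mset n i"

definition good where "good I Y \<longleftrightarrow> JJ \<subseteq> I \<and> I \<subseteq> BB \<and> Y \<in> Ob (twolim I Phi PO PM)"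

definition xx where
  "xx Y T i j = Comp (Phi T) (ginv (Phi T) (PO T (MM i) (fst Y (MM i))) (fst Y T) (snd Y T (MM i))) (snd Y T (MM j))"

definition tau where "tau Y U i j = PM U (MM i \<inter> MM j) (xx Y (MM i \<inter> MM j) i j)"

lemma G: "U \<in> BB \<Longrightarrow> groupoid (Phi U)" using gdD(1)[OF gd] .
lemma cU: "U \<in> BB \<Longrightarrow> category (Phi U)" using G gcat by blast
lemma F: "U \<in> BB \<Longrightarrow> V \<in> BB \<Longrightarrow> U \<subseteq> V \<Longrightarrow> is_functor (Phi V) (Phi U) (PO U V) (PM U V)"
  using gdD(2)[OF gd] .
lemma POt: "U \<in> BB \<Longrightarrow> V \<in> BB \<Longrightarrow> W \<in> BB \<Longrightarrow> U \<subseteq> V \<Longrightarrow> V \<subseteq> W \<Longrightarrow> x \<in> Ob (Phi W) \<Longrightarrow>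
          PO U V (PO V W x) = PO U W x" using gdD(5)[OF gd] .
lemma PMt: "U \<in> BB \<Longrightarrow> V \<in> BB \<Longrightarrow> W \<in> BB \<Longrightarrow> U \<subseteq> V \<Longrightarrow> V \<subseteq> W \<Longrightarrow> f \<in> Hom (Phi W) x y \<Longrightarrow>
          PM U V (PM V W f) = PM U W f" using gdD(6)[OF gd] .
lemma POid: "U \<in> BB \<Longrightarrow> x \<in> Ob (Phi U) \<Longrightarrow> PO U U x = x" using gdD(3)[OF gd] .
lemma JsB: "U \<in> JJ \<Longrightarrow> U \<in> BB" using JB by blast
lemma MJ: "i \<in> {1..n} \<Longrightarrow> MM i \<in> JJ" using M_J[OF kn] .
lemma MB: "i \<in> {1..n} \<Longrightarrow> MM i \<in> BB" using MJ JsB by blast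

lemma goodD:
  assumes "good I Y"
  shows "U \<in> I \<Longrightarrow> fst Y U \<in> Ob (Phi U)"
    and "U \<in> I \<Longrightarrow> V \<in> I \<Longrightarrow> U \<subseteq> V \<Longrightarrow> snd Y U V \<in> Hom (Phi U) (PO U V (fst Y V)) (fst Y U)"
    and "U \<in> I \<Longrightarrow> snd Y U U = Id (Phi U) (fst Y U)"
    and "U \<in> I \<Longrightarrow> V \<in> I \<Longrightarrow> W \<in> I \<Longrightarrow> U \<subseteq> V \<Longrightarrow> V \<subseteq> W \<Longrightarrow>
          snd Y U W = Comp (Phi U) (snd Y U V) (PM U V (snd Y V W))"
    and "U \<in> JJ \<Longrightarrow> U \<in> I" and "U \<in> I \<Longrightarrow> U \<in> BB"
proof -
  have t: "tlob I Phi PO PM (fst Y) (snd Y)" using assms Ob_tl unfolding good_def by blast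
  show "U \<in> I \<Longrightarrow> fst Y U \<in> Ob (Phi U)" using tlobD(1)[OF t] .
  show "U \<in> I \<Longrightarrow> V \<in> I \<Longrightarrow> U \<subseteq> V \<Longrightarrow> snd Y U V \<in> Hom (Phi U) (PO U V (fst Y V)) (fst Y U)"
    using tlobD(3)[OF t] .
  show "U \<in> I \<Longrightarrow> snd Y U U = Id (Phi U) (fst Y U)" using tlobD(5)[OF t] .
  show "U \<in> I \<Longrightarrow> V \<in> I \<Longrightarrow> W \<in> I \<Longrightarrow> U \<subseteq> V \<Longrightarrow> V \<subseteq> W \<Longrightarrow>
          snd Y U W = Comp (Phi U) (snd Y U V) (PM U V (snd Y V W))" using tlobD(6)[OF t] .
  show "U \<in> JJ \<Longrightarrow> U \<in> I" using assms unfolding good_def by blast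
  show "U \<in> I \<Longrightarrow> U \<in> BB" using assms unfolding good_def by blast
qed

lemma xx_hom: assumes Y: "good I Y" and T: "T \<in> JJ" and i: "i \<in> {1..n}" and j: "j \<in> {1..n}"
  and TM: "T \<subseteq> MM i \<inter> MM j"
  shows "xx Y T i j \<in> Hom (Phi T) (PO T (MM j) (fst Y (MM j))) (PO T (MM i) (fst Y (MM i)))"
proof -
  have TB: "T \<in> BB" using T JsB by blast
  have a1: "snd Y T (MM i) \<in> Hom (Phi T) (PO T (MM i) (fst Y (MM i))) (fst Y T)"
    using goodD(2)[OF Y goodD(5)[OF Y T] goodD(5)[OF Y MJ[OF i]]] TM by blast
  have a2: "snd Y T (MM j) \<in> Hom (Phi T) (PO T (MM j) (fst Y (MM j))) (fst Y T)"
    using goodD(2)[OF Y goodD(5)[OF Y T] goodD(5)[OF Y MJ[OF j]]] TM by blast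
  show ?thesis unfolding xx_def using cat_comp[OF cU[OF TB] a2 ginv_hom[OF G[OF TB] a1]] .
qed

lemma xx_char: assumes Y: "good I Y" and T: "T \<in> JJ" and i: "i \<in> {1..n}" and j: "j \<in> {1..n}"
  and TM: "T \<subseteq> MM i \<inter> MM j"
  shows "Comp (Phi T) (snd Y T (MM i)) (xx Y T i j) = snd Y T (MM j)"
proof -
  have TB: "T \<in> BB" using T JsB by blast
  have a1: "snd Y T (MM i) \<in> Hom (Phi T) (PO T (MM i) (fst Y (MM i))) (fst Y T)"
    using goodD(2)[OF Y goodD(5)[OF Y T] goodD(5)[OF Y MJ[OF i]]] TM by blast
  have a2: "snd Y T (MM j) \<in> Hom (Phi T) (PO T (MM j) (fst Y (MM j))) (fst Y T)"
    using goodD(2)[OF Y goodD(5)[OF Y T] goodD(5)[OF Y MJ[OF j]]] TM by blast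
  show ?thesis unfolding xx_def
    using cat_assoc[OF cU[OF TB] a2 ginv_hom[OF G[OF TB] a1] a1] ginv_r[OF G[OF TB] a1] cat_idl[OF cU[OF TB] a2]
    by simp
qed

lemma xx_PM: assumes Y: "good I Y" and U: "U \<in> I" and T: "T \<in> JJ" and i: "i \<in> {1..n}" and j: "j \<in> {1..n}"
  and UT: "U \<subseteq> T" and TM: "T \<subseteq> MM i \<inter> MM j"
  shows "Comp (Phi U) (snd Y U (MM i)) (PM U T (xx Y T i j)) = snd Y U (MM j)"
proof -
  have TB: "T \<in> BB" using T JsB by blast
  have UB: "U \<in> BB" using goodD(6)[OF Y U] .
  have TI: "T \<in> I" using goodD(5)[OF Y T] .
  have MiI: "MM i \<in> I" using goodD(5)[OF Y MJ[OF i]] .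
  have MjI: "MM j \<in> I" using goodD(5)[OF Y MJ[OF j]] .
  have Fu: "is_functor (Phi T) (Phi U) (PO U T) (PM U T)" using F[OF UB TB UT] .
  have x: "xx Y T i j \<in> Hom (Phi T) (PO T (MM j) (fst Y (MM j))) (PO T (MM i) (fst Y (MM i)))"
    using xx_hom[OF Y T i j TM] .
  have a1: "snd Y T (MM i) \<in> Hom (Phi T) (PO T (MM i) (fst Y (MM i))) (fst Y T)"
    using goodD(2)[OF Y TI MiI] TM by blast
  have aUT: "snd Y U T \<in> Hom (Phi U) (PO U T (fst Y T)) (fst Y U)" using goodD(2)[OF Y U TI UT] .
  have co1: "snd Y U (MM i) = Comp (Phi U) (snd Y U T) (PM U T (snd Y T (MM i)))"
    using goodD(4)[OF Y U TI MiI UT] TM by blast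
  have co2: "snd Y U (MM j) = Comp (Phi U) (snd Y U T) (PM U T (snd Y T (MM j)))"
    using goodD(4)[OF Y U TI MjI UT] TM by blast
  have "Comp (Phi U) (snd Y U (MM i)) (PM U T (xx Y T i j))
      = Comp (Phi U) (Comp (Phi U) (snd Y U T) (PM U T (snd Y T (MM i)))) (PM U T (xx Y T i j))"
    using co1 by simp
  also have "\<dots> = Comp (Phi U) (snd Y U T) (Comp (Phi U) (PM U T (snd Y T (MM i))) (PM U T (xx Y T i j)))"
    using cat_assoc[OF cU[OF UB] fun_hom[OF Fu x] fun_hom[OF Fu a1] aUT] by simp
  also have "\<dots> = Comp (Phi U) (snd Y U T) (PM U T (Comp (Phi T) (snd Y T (MM i)) (xx Y T i j)))"
    using fun_comp[OF Fu x a1] by simp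
  also have "\<dots> = snd Y U (MM j)" using xx_char[OF Y T i j TM] co2 by simp
  finally show ?thesis .
qed

lemma xx_restr: assumes Y: "good I Y" and T: "T \<in> JJ" and T': "T' \<in> JJ" and i: "i \<in> {1..n}" and j: "j \<in> {1..n}"
  and TT: "T \<subseteq> T'" and TM: "T' \<subseteq> MM i \<inter> MM j"
  shows "PM T T' (xx Y T' i j) = xx Y T i j"
proof -
  have TB: "T \<in> BB" using T JsB by blast
  have T'B: "T' \<in> BB" using T' JsB by blast
  have TI: "T \<in> I" using goodD(5)[OF Y T] .
  have MiI: "MM i \<in> I" using goodD(5)[OF Y MJ[OF i]] .
  have TM2: "T \<subseteq> MM i \<inter> MM j" using TT TM by blast
  have Fu: "is_functor (Phi T') (Phi T) (PO T T') (PM T T')" using F[OF TB T'B TT] .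
  have x: "xx Y T' i j \<in> Hom (Phi T') (PO T' (MM j) (fst Y (MM j))) (PO T' (MM i) (fst Y (MM i)))"
    using xx_hom[OF Y T' i j TM] .
  have e1: "PO T T' (PO T' (MM j) (fst Y (MM j))) = PO T (MM j) (fst Y (MM j))"
    using POt[OF TB T'B MB[OF j] TT] TM goodD(1)[OF Y goodD(5)[OF Y MJ[OF j]]] by blast
  have e2: "PO T T' (PO T' (MM i) (fst Y (MM i))) = PO T (MM i) (fst Y (MM i))"
    using POt[OF TB T'B MB[OF i] TT] TM goodD(1)[OF Y goodD(5)[OF Y MJ[OF i]]] by blast
  have g1: "PM T T' (xx Y T' i j) \<in> Hom (Phi T) (PO T (MM j) (fst Y (MM j))) (PO T (MM i) (fst Y (MM i)))"
    using fun_hom[OF Fu x] e1 e2 by simp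
  have g2: "xx Y T i j \<in> Hom (Phi T) (PO T (MM j) (fst Y (MM j))) (PO T (MM i) (fst Y (MM i)))"
    using xx_hom[OF Y T i j TM2] .
  have a1: "snd Y T (MM i) \<in> Hom (Phi T) (PO T (MM i) (fst Y (MM i))) (fst Y T)"
    using goodD(2)[OF Y TI MiI] TM2 by blast
  have "Comp (Phi T) (snd Y T (MM i)) (PM T T' (xx Y T' i j)) = Comp (Phi T) (snd Y T (MM i)) (xx Y T i j)"
    using xx_PM[OF Y TI T' i j TT TM] xx_char[OF Y T i j TM2] by simp
  then show ?thesis using cancel_l[OF G[OF TB] a1 g1 g2] by blast
qed

lemma tau_T: assumes Y: "good I Y" and k2: "k + 2 \<le> n" and U: "U \<in> BB" and T: "T \<in> JJ"
  and i: "i \<in> {1..n}" and j: "j \<in> {1..n}" and UT: "U \<subseteq> T" and TM: "T \<subseteq> MM i \<inter> MM j"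
  shows "tau Y U i j = PM U T (xx Y T i j)"
proof -
  let ?T0 = "MM i \<inter> MM j"
  have T0: "?T0 \<in> JJ" using M2_J[OF k2 i] .
  have TB: "T \<in> BB" using T JsB by blast
  have T0B: "?T0 \<in> BB" using T0 JsB by blast
  have x: "xx Y ?T0 i j \<in> Hom (Phi ?T0) (PO ?T0 (MM j) (fst Y (MM j))) (PO ?T0 (MM i) (fst Y (MM i)))"
    using xx_hom[OF Y T0 i j] by blast
  have "tau Y U i j = PM U T (PM T ?T0 (xx Y ?T0 i j))"
    unfolding tau_def using PMt[OF U TB T0B UT TM x] by simp
  also have "\<dots> = PM U T (xx Y T i j)" using xx_restr[OF Y T T0 i j TM] by simp
  finally show ?thesis .
qed

lemma tau_hom: assumes Y: "good I Y" and k2: "k + 2 \<le> n" and U: "U \<in> BB"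
  and i: "i \<in> {1..n}" and j: "j \<in> {1..n}" and iU: "i \<notin> U" and jU: "j \<notin> U"
  shows "tau Y U i j \<in> Hom (Phi U) (PO U (MM j) (fst Y (MM j))) (PO U (MM i) (fst Y (MM i)))"
proof -
  let ?T0 = "MM i \<inter> MM j"
  have T0: "?T0 \<in> JJ" using M2_J[OF k2 i] .
  have T0B: "?T0 \<in> BB" using T0 JsB by blast
  have UT: "U \<subseteq> ?T0" using sub_M[OF U iU] sub_M[OF U jU] by blast
  have x: "xx Y ?T0 i j \<in> Hom (Phi ?T0) (PO ?T0 (MM j) (fst Y (MM j))) (PO ?T0 (MM i) (fst Y (MM i)))"
    using xx_hom[OF Y T0 i j] by blast
  have e1: "PO U ?T0 (PO ?T0 (MM j) (fst Y (MM j))) = PO U (MM j) (fst Y (MM j))"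
    using POt[OF U T0B MB[OF j] UT] goodD(1)[OF Y goodD(5)[OF Y MJ[OF j]]] by blast
  have e2: "PO U ?T0 (PO ?T0 (MM i) (fst Y (MM i))) = PO U (MM i) (fst Y (MM i))"
    using POt[OF U T0B MB[OF i] UT] goodD(1)[OF Y goodD(5)[OF Y MJ[OF i]]] by blast
  show ?thesis unfolding tau_def using fun_hom[OF F[OF U T0B UT] x] e1 e2 by simp
qed

lemma tau_al: assumes Y: "good I Y" and k2: "k + 2 \<le> n" and U: "U \<in> I"
  and i: "i \<in> {1..n}" and j: "j \<in> {1..n}" and iU: "i \<notin> U" and jU: "j \<notin> U"
  shows "Comp (Phi U) (snd Y U (MM i)) (tau Y U i j) = snd Y U (MM j)"
proof -
  let ?T0 = "MM i \<inter> MM j"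
  have T0: "?T0 \<in> JJ" using M2_J[OF k2 i] .
  have UB: "U \<in> BB" using goodD(6)[OF Y U] .
  have UT: "U \<subseteq> ?T0" using sub_M[OF UB iU] sub_M[OF UB jU] by blast
  show ?thesis unfolding tau_def using xx_PM[OF Y U T0 i j UT] by blast
qed

lemma tau_id: assumes Y: "good I Y" and U: "U \<in> BB" and i: "i \<in> {1..n}" and iU: "i \<notin> U"
  shows "tau Y U i i = Id (Phi U) (PO U (MM i) (fst Y (MM i)))"
proof -
  have Mi: "MM i \<in> JJ" using MJ[OF i] .
  have MiB: "MM i \<in> BB" using MB[OF i] .
  have MiI: "MM i \<in> I" using goodD(5)[OF Y Mi] .
  have ob: "fst Y (MM i) \<in> Ob (Phi (MM i))" using goodD(1)[OF Y MiI] .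
  have idd: "snd Y (MM i) (MM i) = Id (Phi (MM i)) (fst Y (MM i))" using goodD(3)[OF Y MiI] .
  have po: "PO (MM i) (MM i) (fst Y (MM i)) = fst Y (MM i)" using POid[OF MiB ob] .
  have ih: "Id (Phi (MM i)) (fst Y (MM i)) \<in> Hom (Phi (MM i)) (fst Y (MM i)) (fst Y (MM i))"
    using cat_id[OF cU[OF MiB] ob] .
  have "xx Y (MM i) i i = Id (Phi (MM i)) (fst Y (MM i))"
    unfolding xx_def idd po using ginv_l[OF G[OF MiB] ih] by simp
  then show ?thesis unfolding tau_def using fun_id[OF F[OF U MiB sub_M[OF U iU]] ob] by simp
qed

lemma tau_restr: assumes Y: "good I Y" and k2: "k + 2 \<le> n" and U: "U \<in> BB" and V: "V \<in> BB" and UV: "U \<subseteq> V"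
  and i: "i \<in> {1..n}" and j: "j \<in> {1..n}" and iV: "i \<notin> V" and jV: "j \<notin> V"
  shows "PM U V (tau Y V i j) = tau Y U i j"
proof -
  let ?T0 = "MM i \<inter> MM j"
  have T0: "?T0 \<in> JJ" using M2_J[OF k2 i] .
  have T0B: "?T0 \<in> BB" using T0 JsB by blast
  have VT: "V \<subseteq> ?T0" using sub_M[OF V iV] sub_M[OF V jV] by blast
  have x: "xx Y ?T0 i j \<in> Hom (Phi ?T0) (PO ?T0 (MM j) (fst Y (MM j))) (PO ?T0 (MM i) (fst Y (MM i)))"
    using xx_hom[OF Y T0 i j] by blast
  show ?thesis unfolding tau_def using PMt[OF U V T0B UV VT x] .
qed

lemma tau_cocycle: assumes Y: "good I Y" and k3: "k + 3 \<le> n" and U: "U \<in> BB"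
  and i: "i \<in> {1..n}" and j: "j \<in> {1..n}" and l: "l \<in> {1..n}" and iU: "i \<notin> U" and jU: "j \<notin> U" and lU: "l \<notin> U"
  shows "Comp (Phi U) (tau Y U i j) (tau Y U j l) = tau Y U i l"
proof -
  have k2: "k + 2 \<le> n" using k3 by simp
  let ?T = "MM i \<inter> MM j \<inter> MM l"
  have T: "?T \<in> JJ" using M3_J[OF k3 i] .
  have TB: "?T \<in> BB" using T JsB by blast
  have TI: "?T \<in> I" using goodD(5)[OF Y T] .
  have UT: "U \<subseteq> ?T" using sub_M[OF U iU] sub_M[OF U jU] sub_M[OF U lU] by blast
  have Fu: "is_functor (Phi ?T) (Phi U) (PO U ?T) (PM U ?T)" using F[OF U TB UT] .
  have sij: "?T \<subseteq> MM i \<inter> MM j" and sjl: "?T \<subseteq> MM j \<inter> MM l" and sil: "?T \<subseteq> MM i \<inter> MM l" by auto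
  have t1: "tau Y U i j = PM U ?T (xx Y ?T i j)" using tau_T[OF Y k2 U T i j UT] by blast
  have t2: "tau Y U j l = PM U ?T (xx Y ?T j l)" using tau_T[OF Y k2 U T j l UT] by blast
  have t3: "tau Y U i l = PM U ?T (xx Y ?T i l)" using tau_T[OF Y k2 U T i l UT] by blast
  have x1: "xx Y ?T i j \<in> Hom (Phi ?T) (PO ?T (MM j) (fst Y (MM j))) (PO ?T (MM i) (fst Y (MM i)))"
    using xx_hom[OF Y T i j] by blast
  have x2: "xx Y ?T j l \<in> Hom (Phi ?T) (PO ?T (MM l) (fst Y (MM l))) (PO ?T (MM j) (fst Y (MM j)))"
    using xx_hom[OF Y T j l] by blast
  have x3: "xx Y ?T i l \<in> Hom (Phi ?T) (PO ?T (MM l) (fst Y (MM l))) (PO ?T (MM i) (fst Y (MM i)))"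
    using xx_hom[OF Y T i l] by blast
  have a1: "snd Y ?T (MM i) \<in> Hom (Phi ?T) (PO ?T (MM i) (fst Y (MM i))) (fst Y ?T)"
    using goodD(2)[OF Y TI goodD(5)[OF Y MJ[OF i]]] by blast
  have c12: "Comp (Phi ?T) (xx Y ?T i j) (xx Y ?T j l) \<in> Hom (Phi ?T) (PO ?T (MM l) (fst Y (MM l))) (PO ?T (MM i) (fst Y (MM i)))"
    using cat_comp[OF cU[OF TB] x2 x1] .
  have "Comp (Phi ?T) (snd Y ?T (MM i)) (Comp (Phi ?T) (xx Y ?T i j) (xx Y ?T j l))
      = Comp (Phi ?T) (Comp (Phi ?T) (snd Y ?T (MM i)) (xx Y ?T i j)) (xx Y ?T j l)"
    using cat_assoc[OF cU[OF TB] x2 x1 a1] .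
  also have "\<dots> = Comp (Phi ?T) (snd Y ?T (MM j)) (xx Y ?T j l)" using xx_char[OF Y T i j sij] by simp
  also have "\<dots> = snd Y ?T (MM l)" using xx_char[OF Y T j l sjl] by simp
  also have "\<dots> = Comp (Phi ?T) (snd Y ?T (MM i)) (xx Y ?T i l)" using xx_char[OF Y T i l sil] by simp
  finally have "Comp (Phi ?T) (xx Y ?T i j) (xx Y ?T j l) = xx Y ?T i l"
    using cancel_l[OF G[OF TB] a1 c12 x3] by blast
  then show ?thesis using t1 t2 t3 fun_comp[OF Fu x2 x1] by simp
qed

lemma tau_nat: assumes Y: "good I Y" and Y': "good I Y'" and h: "h \<in> Hom (twolim I Phi PO PM) Y Y'"
  and k2: "k + 2 \<le> n" and U: "U \<in> BB"
  and i: "i \<in> {1..n}" and j: "j \<in> {1..n}" and iU: "i \<notin> U" and jU: "j \<notin> U"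
  shows "Comp (Phi U) (PM U (MM i) (h (MM i))) (tau Y U i j) = Comp (Phi U) (tau Y' U i j) (PM U (MM j) (h (MM j)))"
proof -
  let ?T = "MM i \<inter> MM j"
  have T: "?T \<in> JJ" using M2_J[OF k2 i] .
  have TB: "?T \<in> BB" using T JsB by blast
  have TI: "?T \<in> I" using goodD(5)[OF Y T] .
  have MiI: "MM i \<in> I" using goodD(5)[OF Y MJ[OF i]] .
  have MjI: "MM j \<in> I" using goodD(5)[OF Y MJ[OF j]] .
  have sT: "?T \<subseteq> MM i \<inter> MM j" by simp
  have Ti: "?T \<subseteq> MM i" and Tj: "?T \<subseteq> MM j" by auto
  have UT: "U \<subseteq> ?T" using sub_M[OF U iU] sub_M[OF U jU] by blast
  have hi: "h (MM i) \<in> Hom (Phi (MM i)) (fst Y (MM i)) (fst Y' (MM i))" using HomD(3)[OF h MiI] .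
  have hj: "h (MM j) \<in> Hom (Phi (MM j)) (fst Y (MM j)) (fst Y' (MM j))" using HomD(3)[OF h MjI] .
  have hT: "h ?T \<in> Hom (Phi ?T) (fst Y ?T) (fst Y' ?T)" using HomD(3)[OF h TI] .
  have Fi: "is_functor (Phi (MM i)) (Phi ?T) (PO ?T (MM i)) (PM ?T (MM i))" using F[OF TB MB[OF i] Ti] .
  have Fj: "is_functor (Phi (MM j)) (Phi ?T) (PO ?T (MM j)) (PM ?T (MM j))" using F[OF TB MB[OF j] Tj] .
  have Fu: "is_functor (Phi ?T) (Phi U) (PO U ?T) (PM U ?T)" using F[OF U TB UT] .
  have phi: "PM ?T (MM i) (h (MM i)) \<in> Hom (Phi ?T) (PO ?T (MM i) (fst Y (MM i))) (PO ?T (MM i) (fst Y' (MM i)))"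
    using fun_hom[OF Fi hi] .
  have phj: "PM ?T (MM j) (h (MM j)) \<in> Hom (Phi ?T) (PO ?T (MM j) (fst Y (MM j))) (PO ?T (MM j) (fst Y' (MM j)))"
    using fun_hom[OF Fj hj] .
  have x: "xx Y ?T i j \<in> Hom (Phi ?T) (PO ?T (MM j) (fst Y (MM j))) (PO ?T (MM i) (fst Y (MM i)))"
    using xx_hom[OF Y T i j sT] .
  have x': "xx Y' ?T i j \<in> Hom (Phi ?T) (PO ?T (MM j) (fst Y' (MM j))) (PO ?T (MM i) (fst Y' (MM i)))"
    using xx_hom[OF Y' T i j sT] .
  have ai: "snd Y ?T (MM i) \<in> Hom (Phi ?T) (PO ?T (MM i) (fst Y (MM i))) (fst Y ?T)"
    using goodD(2)[OF Y TI MiI Ti] .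
  have a'i: "snd Y' ?T (MM i) \<in> Hom (Phi ?T) (PO ?T (MM i) (fst Y' (MM i))) (fst Y' ?T)"
    using goodD(2)[OF Y' TI MiI Ti] .
  have a'j: "snd Y' ?T (MM j) \<in> Hom (Phi ?T) (PO ?T (MM j) (fst Y' (MM j))) (fst Y' ?T)"
    using goodD(2)[OF Y' TI MjI Tj] .
  have aj: "snd Y ?T (MM j) \<in> Hom (Phi ?T) (PO ?T (MM j) (fst Y (MM j))) (fst Y ?T)"
    using goodD(2)[OF Y TI MjI Tj] .
  have ni: "Comp (Phi ?T) (h ?T) (snd Y ?T (MM i)) = Comp (Phi ?T) (snd Y' ?T (MM i)) (PM ?T (MM i) (h (MM i)))"
    using HomD(5)[OF h TI MiI Ti] .
  have nj: "Comp (Phi ?T) (h ?T) (snd Y ?T (MM j)) = Comp (Phi ?T) (snd Y' ?T (MM j)) (PM ?T (MM j) (h (MM j)))"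
    using HomD(5)[OF h TI MjI Tj] .
  have c: "category (Phi ?T)" using cU[OF TB] .
  have L: "Comp (Phi ?T) (PM ?T (MM i) (h (MM i))) (xx Y ?T i j) \<in> Hom (Phi ?T) (PO ?T (MM j) (fst Y (MM j))) (PO ?T (MM i) (fst Y' (MM i)))"
    using cat_comp[OF c x phi] .
  have R: "Comp (Phi ?T) (xx Y' ?T i j) (PM ?T (MM j) (h (MM j))) \<in> Hom (Phi ?T) (PO ?T (MM j) (fst Y (MM j))) (PO ?T (MM i) (fst Y' (MM i)))"
    using cat_comp[OF c phj x'] .
  have "Comp (Phi ?T) (snd Y' ?T (MM i)) (Comp (Phi ?T) (PM ?T (MM i) (h (MM i))) (xx Y ?T i j))
     = Comp (Phi ?T) (Comp (Phi ?T) (snd Y' ?T (MM i)) (PM ?T (MM i) (h (MM i)))) (xx Y ?T i j)"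
    using cat_assoc[OF c x phi a'i] .
  also have "\<dots> = Comp (Phi ?T) (Comp (Phi ?T) (h ?T) (snd Y ?T (MM i))) (xx Y ?T i j)" using ni by simp
  also have "\<dots> = Comp (Phi ?T) (h ?T) (Comp (Phi ?T) (snd Y ?T (MM i)) (xx Y ?T i j))"
    using cat_assoc[OF c x ai hT] by simp
  also have "\<dots> = Comp (Phi ?T) (h ?T) (snd Y ?T (MM j))" using xx_char[OF Y T i j sT] by simp
  also have "\<dots> = Comp (Phi ?T) (Comp (Phi ?T) (snd Y' ?T (MM i)) (xx Y' ?T i j)) (PM ?T (MM j) (h (MM j)))"
    using nj xx_char[OF Y' T i j sT] by simp
  also have "\<dots> = Comp (Phi ?T) (snd Y' ?T (MM i)) (Comp (Phi ?T) (xx Y' ?T i j) (PM ?T (MM j) (h (MM j))))"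
    using cat_assoc[OF c phj x' a'i] by simp
  finally have br: "Comp (Phi ?T) (PM ?T (MM i) (h (MM i))) (xx Y ?T i j) = Comp (Phi ?T) (xx Y' ?T i j) (PM ?T (MM j) (h (MM j)))"
    using cancel_l[OF G[OF TB] a'i L R] by blast
  have li: "PM U (MM i) (h (MM i)) = PM U ?T (PM ?T (MM i) (h (MM i)))"
    using PMt[OF U TB MB[OF i] UT Ti hi] by simp
  have lj: "PM U (MM j) (h (MM j)) = PM U ?T (PM ?T (MM j) (h (MM j)))"
    using PMt[OF U TB MB[OF j] UT Tj hj] by simp
  have "Comp (Phi U) (PM U (MM i) (h (MM i))) (tau Y U i j) = PM U ?T (Comp (Phi ?T) (PM ?T (MM i) (h (MM i))) (xx Y ?T i j))"
    unfolding tau_def li using fun_comp[OF Fu x phi] by simp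
  also have "\<dots> = PM U ?T (Comp (Phi ?T) (xx Y' ?T i j) (PM ?T (MM j) (h (MM j))))" using br by simp
  also have "\<dots> = Comp (Phi U) (tau Y' U i j) (PM U (MM j) (h (MM j)))"
    unfolding tau_def lj using fun_comp[OF Fu phj x'] by simp
  finally show ?thesis .
qed

lemma tau_res: assumes k2: "k + 2 \<le> n" and i: "i \<in> {1..n}" and j: "j \<in> {1..n}"
  shows "tau (resO JJ X) U i j = tau X U i j"
proof -
  have T: "MM i \<inter> MM j \<in> JJ" using M2_J[OF k2 i] .
  show ?thesis unfolding tau_def xx_def fst_resO snd_resO using T MJ[OF i] MJ[OF j] by simp
qed

lemma good_C: "X \<in> Ob (twolim BB Phi PO PM) \<Longrightarrow> good BB X" unfolding good_def using JB by blast
lemma good_D: "X \<in> Ob (twolim JJ Phi PO PM) \<Longrightarrow> good JJ X" unfolding good_def using JB by blast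
lemma good_res: "X \<in> Ob (twolim BB Phi PO PM) \<Longrightarrow> good JJ (resO JJ X)"
  using good_D res_ob[OF gd JB] by blast

lemma R1: assumes X: "good I X" and k2: "k + 2 \<le> n" and U: "U \<in> I" and W: "W \<in> I" and UW: "U \<subseteq> W"
  shows "Comp (Phi U) (snd X U (MM (idx n U))) (tau X U (idx n U) (idx n W)) =
         Comp (Phi U) (snd X U W) (PM U W (snd X W (MM (idx n W))))"
proof -
  have UB: "U \<in> BB" using goodD(6)[OF X U] .
  have WB: "W \<in> BB" using goodD(6)[OF X W] .
  have i: "idx n U \<in> {1..n}" "idx n U \<notin> U" using idx[OF UB] by auto
  have j: "idx n W \<in> {1..n}" "idx n W \<notin> W" using idx[OF WB] by auto
  have jU: "idx n W \<notin> U" using j UW by blast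
  have WM: "W \<subseteq> MM (idx n W)" using sub_M[OF WB j(2)] .
  have MI: "MM (idx n W) \<in> I" using goodD(5)[OF X MJ[OF j(1)]] .
  have "Comp (Phi U) (snd X U (MM (idx n U))) (tau X U (idx n U) (idx n W)) = snd X U (MM (idx n W))"
    using tau_al[OF X k2 U i(1) j(1) i(2) jU] .
  also have "\<dots> = Comp (Phi U) (snd X U W) (PM U W (snd X W (MM (idx n W))))"
    using goodD(4)[OF X U W MI UW WM] .
  finally show ?thesis .
qed

lemma faithful_thm: "faithful (twolim BB Phi PO PM) (twolim JJ Phi PO PM) (resO JJ) (resM JJ)"
  unfolding faithful_def
proof (intro conjI allI impI)
  show "is_functor (twolim BB Phi PO PM) (twolim JJ Phi PO PM) (resO JJ) (resM JJ)"
    using res_functor[OF gd JB] .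
  fix X Y f g assume a: "f \<in> Hom (twolim BB Phi PO PM) X Y \<and> g \<in> Hom (twolim BB Phi PO PM) X Y \<and> resM JJ f = resM JJ g"
  hence f: "f \<in> Hom (twolim BB Phi PO PM) X Y" and g: "g \<in> Hom (twolim BB Phi PO PM) X Y"
    and e: "resM JJ f = resM JJ g" by auto
  show "f = g"
  proof (rule ext)
    fix U show "f U = g U"
    proof (cases "U \<in> BB")
      case False then show ?thesis using HomD(4)[OF f] HomD(4)[OF g] by simp
    next
      case True
      have i: "idx n U \<in> {1..n}" "idx n U \<notin> U" using idx[OF True] by auto
      let ?M = "MM (idx n U)"
      have MJ': "?M \<in> JJ" using MJ[OF i(1)] .
      have MB': "?M \<in> BB" using MB[OF i(1)] .
      have UM: "U \<subseteq> ?M" using sub_M[OF True i(2)] .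
      have fM: "f ?M = g ?M" using fun_cong[OF e, of ?M] MJ' by (simp add: resM_def)
      have nf: "Comp (Phi U) (f U) (snd X U ?M) = Comp (Phi U) (snd Y U ?M) (PM U ?M (f ?M))"
        using HomD(5)[OF f True MB' UM] .
      have ng: "Comp (Phi U) (g U) (snd X U ?M) = Comp (Phi U) (snd Y U ?M) (PM U ?M (g ?M))"
        using HomD(5)[OF g True MB' UM] .
      have al: "snd X U ?M \<in> Hom (Phi U) (PO U ?M (fst X ?M)) (fst X U)"
        using goodD(2)[OF good_C[OF HomD(1)[OF f]] True MB' UM] .
      show ?thesis using cancel_r[OF G[OF True] al HomD(3)[OF f True] HomD(3)[OF g True]] nf ng fM by simp
    qed
  qed
qed

lemma full_thm: assumes k2: "k + 2 \<le> n"
  shows "full (twolim BB Phi PO PM) (twolim JJ Phi PO PM) (resO JJ) (resM JJ)"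
  unfolding full_def
proof (intro conjI ballI)
  show "is_functor (twolim BB Phi PO PM) (twolim JJ Phi PO PM) (resO JJ) (resM JJ)"
    using res_functor[OF gd JB] .
  fix A B h assume A: "A \<in> Ob (twolim BB Phi PO PM)" and B: "B \<in> Ob (twolim BB Phi PO PM)"
    and h: "h \<in> Hom (twolim JJ Phi PO PM) (resO JJ A) (resO JJ B)"
  have gA: "good BB A" using good_C[OF A] .
  have gB: "good BB B" using good_C[OF B] .
  have gA': "good JJ (resO JJ A)" using good_res[OF A] .
  have gB': "good JJ (resO JJ B)" using good_res[OF B] .
  define th where "th X U = snd X U (MM (idx n U))" for X :: "(nat set \<Rightarrow> 'o) \<times> (nat set \<Rightarrow> nat set \<Rightarrow> 'm)" and U
  define gg where "gg U = PM U (MM (idx n U)) (h (MM (idx n U)))" for U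
  define f where "f U = (if U \<in> BB then Comp (Phi U) (Comp (Phi U) (th B U) (gg U))
      (ginv (Phi U) (PO U (MM (idx n U)) (fst A (MM (idx n U)))) (fst A U) (th A U)) else undefined)" for U
  have thh: "th X U \<in> Hom (Phi U) (PO U (MM (idx n U)) (fst X (MM (idx n U)))) (fst X U)"
    if X: "good BB X" and U: "U \<in> BB" for X U
  proof -
    have i: "idx n U \<in> {1..n}" "idx n U \<notin> U" using idx[OF U] by auto
    show ?thesis unfolding th_def using goodD(2)[OF X U MB[OF i(1)] sub_M[OF U i(2)]] .
  qed
  have ggh: "gg U \<in> Hom (Phi U) (PO U (MM (idx n U)) (fst A (MM (idx n U)))) (PO U (MM (idx n U)) (fst B (MM (idx n U))))"
    if U: "U \<in> BB" for U
  proof -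
    have i: "idx n U \<in> {1..n}" "idx n U \<notin> U" using idx[OF U] by auto
    have "h (MM (idx n U)) \<in> Hom (Phi (MM (idx n U))) (fst A (MM (idx n U))) (fst B (MM (idx n U)))"
      using HomD(3)[OF h MJ[OF i(1)]] MJ[OF i(1)] by (simp add: fst_resO)
    then show ?thesis unfolding gg_def using fun_hom[OF F[OF U MB[OF i(1)] sub_M[OF U i(2)]]] by blast
  qed
  have fh: "f U \<in> Hom (Phi U) (fst A U) (fst B U)" if U: "U \<in> BB" for U
  proof -
    have "Comp (Phi U) (th B U) (gg U) \<in> Hom (Phi U) (PO U (MM (idx n U)) (fst A (MM (idx n U)))) (fst B U)"
      using cat_comp[OF cU[OF U] ggh[OF U] thh[OF gB U]] .
    then show ?thesis unfolding f_def using U cat_comp[OF cU[OF U] ginv_hom[OF G[OF U] thh[OF gA U]]] by simp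
  qed
  have F1: "Comp (Phi U) (f U) (th A U) = Comp (Phi U) (th B U) (gg U)" if U: "U \<in> BB" for U
  proof -
    let ?i = "ginv (Phi U) (PO U (MM (idx n U)) (fst A (MM (idx n U)))) (fst A U) (th A U)"
    have c: "Comp (Phi U) (th B U) (gg U) \<in> Hom (Phi U) (PO U (MM (idx n U)) (fst A (MM (idx n U)))) (fst B U)"
      using cat_comp[OF cU[OF U] ggh[OF U] thh[OF gB U]] .
    have "Comp (Phi U) (f U) (th A U) = Comp (Phi U) (Comp (Phi U) (Comp (Phi U) (th B U) (gg U)) ?i) (th A U)"
      unfolding f_def using U by simp
    also have "\<dots> = Comp (Phi U) (Comp (Phi U) (th B U) (gg U)) (Comp (Phi U) ?i (th A U))"
      using cat_assoc[OF cU[OF U] thh[OF gA U] ginv_hom[OF G[OF U] thh[OF gA U]] c] by simp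
    also have "\<dots> = Comp (Phi U) (th B U) (gg U)"
      using ginv_l[OF G[OF U] thh[OF gA U]] cat_idr[OF cU[OF U] c] by simp
    finally show ?thesis .
  qed
  have fnat: "Comp (Phi U) (f U) (snd A U W) = Comp (Phi U) (snd B U W) (PM U W (f W))"
    if U: "U \<in> BB" and W: "W \<in> BB" and UW: "U \<subseteq> W" for U W
  proof -
    let ?i = "idx n U" and ?j = "idx n W"
    have i: "?i \<in> {1..n}" "?i \<notin> U" using idx[OF U] by auto
    have j: "?j \<in> {1..n}" "?j \<notin> W" using idx[OF W] by auto
    have jU: "?j \<notin> U" using j UW by blast
    have c: "category (Phi U)" using cU[OF U] .
    have Fu: "is_functor (Phi W) (Phi U) (PO U W) (PM U W)" using F[OF U W UW] .
    have WM: "W \<subseteq> MM ?j" using sub_M[OF W j(2)] .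
    have ea: "PO U W (PO W (MM ?j) (fst A (MM ?j))) = PO U (MM ?j) (fst A (MM ?j))"
      using POt[OF U W MB[OF j(1)] UW WM] goodD(1)[OF gA MB[OF j(1)]] by blast
    have eb: "PO U W (PO W (MM ?j) (fst B (MM ?j))) = PO U (MM ?j) (fst B (MM ?j))"
      using POt[OF U W MB[OF j(1)] UW WM] goodD(1)[OF gB MB[OF j(1)]] by blast
    have p: "PM U W (th A W) \<in> Hom (Phi U) (PO U (MM ?j) (fst A (MM ?j))) (PO U W (fst A W))"
      using fun_hom[OF Fu thh[OF gA W]] ea by simp
    have pb: "PM U W (th B W) \<in> Hom (Phi U) (PO U (MM ?j) (fst B (MM ?j))) (PO U W (fst B W))"
      using fun_hom[OF Fu thh[OF gB W]] eb by simp
    have pg: "PM U W (gg W) \<in> Hom (Phi U) (PO U (MM ?j) (fst A (MM ?j))) (PO U (MM ?j) (fst B (MM ?j)))"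
      using fun_hom[OF Fu ggh[OF W]] ea eb by simp
    have pf: "PM U W (f W) \<in> Hom (Phi U) (PO U W (fst A W)) (PO U W (fst B W))"
      using fun_hom[OF Fu fh[OF W]] .
    have aUW: "snd A U W \<in> Hom (Phi U) (PO U W (fst A W)) (fst A U)" using goodD(2)[OF gA U W UW] .
    have bUW: "snd B U W \<in> Hom (Phi U) (PO U W (fst B W)) (fst B U)" using goodD(2)[OF gB U W UW] .
    have tA: "tau A U ?i ?j \<in> Hom (Phi U) (PO U (MM ?j) (fst A (MM ?j))) (PO U (MM ?i) (fst A (MM ?i)))"
      using tau_hom[OF gA k2 U i(1) j(1) i(2) jU] .
    have tB: "tau B U ?i ?j \<in> Hom (Phi U) (PO U (MM ?j) (fst B (MM ?j))) (PO U (MM ?i) (fst B (MM ?i)))"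
      using tau_hom[OF gB k2 U i(1) j(1) i(2) jU] .
    have R1A: "Comp (Phi U) (th A U) (tau A U ?i ?j) = Comp (Phi U) (snd A U W) (PM U W (th A W))"
      unfolding th_def using R1[OF gA k2 U W UW] .
    have R1B: "Comp (Phi U) (th B U) (tau B U ?i ?j) = Comp (Phi U) (snd B U W) (PM U W (th B W))"
      unfolding th_def using R1[OF gB k2 U W UW] .
    have hj: "h (MM ?j) \<in> Hom (Phi (MM ?j)) (fst (resO JJ A) (MM ?j)) (fst (resO JJ B) (MM ?j))"
      using HomD(3)[OF h MJ[OF j(1)]] .
    have pgw: "PM U W (gg W) = PM U (MM ?j) (h (MM ?j))"
      unfolding gg_def using PMt[OF U W MB[OF j(1)] UW WM hj] .
    have R2: "Comp (Phi U) (gg U) (tau A U ?i ?j) = Comp (Phi U) (tau B U ?i ?j) (PM U W (gg W))"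
      using tau_nat[OF gA' gB' h k2 U i(1) j(1) i(2) jU] tau_res[OF k2 i(1) j(1)] pgw
      unfolding gg_def by simp
    have ggU: "gg U \<in> Hom (Phi U) (PO U (MM ?i) (fst A (MM ?i))) (PO U (MM ?i) (fst B (MM ?i)))" using ggh[OF U] .
    have thAU: "th A U \<in> Hom (Phi U) (PO U (MM ?i) (fst A (MM ?i))) (fst A U)" using thh[OF gA U] .
    have thBU: "th B U \<in> Hom (Phi U) (PO U (MM ?i) (fst B (MM ?i))) (fst B U)" using thh[OF gB U] .
    have thBW: "th B W \<in> Hom (Phi W) (PO W (MM ?j) (fst B (MM ?j))) (fst B W)" using thh[OF gB W] .
    have thAW: "th A W \<in> Hom (Phi W) (PO W (MM ?j) (fst A (MM ?j))) (fst A W)" using thh[OF gA W] .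
    have ggW: "gg W \<in> Hom (Phi W) (PO W (MM ?j) (fst A (MM ?j))) (PO W (MM ?j) (fst B (MM ?j)))" using ggh[OF W] .
    have fU: "f U \<in> Hom (Phi U) (fst A U) (fst B U)" using fh[OF U] .
    have fW: "f W \<in> Hom (Phi W) (fst A W) (fst B W)" using fh[OF W] .
    have "Comp (Phi U) (Comp (Phi U) (f U) (snd A U W)) (PM U W (th A W))
        = Comp (Phi U) (f U) (Comp (Phi U) (snd A U W) (PM U W (th A W)))"
      using cat_assoc[OF c p aUW fU] by simp
    also have "\<dots> = Comp (Phi U) (f U) (Comp (Phi U) (th A U) (tau A U ?i ?j))" using R1A by simp
    also have "\<dots> = Comp (Phi U) (Comp (Phi U) (f U) (th A U)) (tau A U ?i ?j)"
      using cat_assoc[OF c tA thAU fU] .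
    also have "\<dots> = Comp (Phi U) (Comp (Phi U) (th B U) (gg U)) (tau A U ?i ?j)" using F1[OF U] by simp
    also have "\<dots> = Comp (Phi U) (th B U) (Comp (Phi U) (gg U) (tau A U ?i ?j))"
      using cat_assoc[OF c tA ggU thBU] by simp
    also have "\<dots> = Comp (Phi U) (th B U) (Comp (Phi U) (tau B U ?i ?j) (PM U W (gg W)))" using R2 by simp
    also have "\<dots> = Comp (Phi U) (Comp (Phi U) (th B U) (tau B U ?i ?j)) (PM U W (gg W))"
      using cat_assoc[OF c pg tB thBU] .
    also have "\<dots> = Comp (Phi U) (Comp (Phi U) (snd B U W) (PM U W (th B W))) (PM U W (gg W))" using R1B by simp
    also have "\<dots> = Comp (Phi U) (snd B U W) (Comp (Phi U) (PM U W (th B W)) (PM U W (gg W)))"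
      using cat_assoc[OF c pg pb bUW] by simp
    also have "\<dots> = Comp (Phi U) (snd B U W) (PM U W (Comp (Phi W) (th B W) (gg W)))"
      using fun_comp[OF Fu ggW thBW] by simp
    also have "\<dots> = Comp (Phi U) (snd B U W) (PM U W (Comp (Phi W) (f W) (th A W)))" using F1[OF W] by simp
    also have "\<dots> = Comp (Phi U) (snd B U W) (Comp (Phi U) (PM U W (f W)) (PM U W (th A W)))"
      using fun_comp[OF Fu thAW fW] by simp
    also have "\<dots> = Comp (Phi U) (Comp (Phi U) (snd B U W) (PM U W (f W))) (PM U W (th A W))"
      using cat_assoc[OF c p pf bUW] .
    finally have eq: "Comp (Phi U) (Comp (Phi U) (f U) (snd A U W)) (PM U W (th A W)) =
        Comp (Phi U) (Comp (Phi U) (snd B U W) (PM U W (f W))) (PM U W (th A W))" .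
    have l: "Comp (Phi U) (f U) (snd A U W) \<in> Hom (Phi U) (PO U W (fst A W)) (fst B U)"
      using cat_comp[OF c aUW fU] .
    have r: "Comp (Phi U) (snd B U W) (PM U W (f W)) \<in> Hom (Phi U) (PO U W (fst A W)) (fst B U)"
      using cat_comp[OF c pf bUW] .
    show ?thesis using cancel_r[OF G[OF U] p l r eq] .
  qed
  have fhom: "f \<in> Hom (twolim BB Phi PO PM) A B"
  proof (rule HomI[OF A B])
    fix U assume U: "U \<in> BB" show "f U \<in> Hom (Phi U) (fst A U) (fst B U)" using fh[OF U] .
  next
    fix U assume U: "U \<notin> BB" show "f U = undefined" using U unfolding f_def by simp
  next
    fix U V assume "U \<in> BB" "V \<in> BB" "U \<subseteq> V" then show "Comp (Phi U) (f U) (snd A U V) = Comp (Phi U) (snd B U V) (PM U V (f V))"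
      using fnat by blast
  qed
  have res: "resM JJ f = h"
  proof (rule ext)
    fix U show "resM JJ f U = h U"
    proof (cases "U \<in> JJ")
      case False then show ?thesis using HomD(4)[OF h False] by (simp add: resM_def)
    next
      case True
      have UB: "U \<in> BB" using JsB[OF True] .
      have i: "idx n U \<in> {1..n}" "idx n U \<notin> U" using idx[OF UB] by auto
      let ?M = "MM (idx n U)"
      have UM: "U \<subseteq> ?M" using sub_M[OF UB i(2)] .
      have hU: "h U \<in> Hom (Phi U) (fst A U) (fst B U)" using HomD(3)[OF h True] True by (simp add: fst_resO)
      have nh: "Comp (Phi U) (h U) (th A U) = Comp (Phi U) (th B U) (gg U)"
        using HomD(5)[OF h True MJ[OF i(1)] UM] True MJ[OF i(1)] UM unfolding th_def gg_def
        by (simp add: snd_resO)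
      have "f U = h U" using cancel_r[OF G[OF UB] thh[OF gA UB] fh[OF UB] hU] F1[OF UB] nh by simp
      then show ?thesis using True by (simp add: resM_def)
    qed
  qed
  show "\<exists>f\<in>Hom (twolim BB Phi PO PM) A B. resM JJ f = h" using fhom res by blast
qed

definition GO where "GO Y = ((\<lambda>U. if U \<in> BB then PO U (MM (idx n U)) (fst Y (MM (idx n U))) else undefined),
   (\<lambda>U W. if U \<in> BB \<and> W \<in> BB \<and> U \<subseteq> W then tau Y U (idx n U) (idx n W) else undefined))"
definition GM where "GM h = (\<lambda>U. if U \<in> BB then PM U (MM (idx n U)) (h (MM (idx n U))) else undefined)"
definition eps where "eps Y = (\<lambda>U. if U \<in> JJ then snd Y U (MM (idx n U)) else undefined)"
definition th where "th X = (\<lambda>U. if U \<in> BB then snd X U (MM (idx n U)) else undefined)"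

lemma gpd_iso: "groupoid C \<Longrightarrow> f \<in> Hom C x y \<Longrightarrow> iso C x y f" unfolding groupoid_def by simp

lemma GO_ob: assumes k3: "k + 3 \<le> n" and Y: "good I Y" shows "GO Y \<in> Ob (twolim BB Phi PO PM)"
proof -
  have k2: "k + 2 \<le> n" using k3 by simp
  have t: "tlob BB Phi PO PM (fst (GO Y)) (snd (GO Y))"
    unfolding tlob_def
  proof (intro conjI ballI allI impI)
    fix U assume U: "U \<in> BB"
    have i: "idx n U \<in> {1..n}" "idx n U \<notin> U" using idx[OF U] by auto
    show "fst (GO Y) U \<in> Ob (Phi U)" unfolding GO_def using U
        fun_ob[OF F[OF U MB[OF i(1)] sub_M[OF U i(2)]] goodD(1)[OF Y goodD(5)[OF Y MJ[OF i(1)]]]] by simp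
    show "snd (GO Y) U U = Id (Phi U) (fst (GO Y) U)" unfolding GO_def using U tau_id[OF Y U i] by simp
  next
    fix U assume "U \<notin> BB" then show "fst (GO Y) U = undefined" unfolding GO_def by simp
  next
    fix U V assume "\<not> (U \<in> BB \<and> V \<in> BB \<and> U \<subseteq> V)" then show "snd (GO Y) U V = undefined" unfolding GO_def by auto
  next
    fix U V assume U: "U \<in> BB" and V: "V \<in> BB" and UV: "U \<subseteq> V"
    have i: "idx n U \<in> {1..n}" "idx n U \<notin> U" using idx[OF U] by auto
    have j: "idx n V \<in> {1..n}" "idx n V \<notin> V" using idx[OF V] by auto
    have jU: "idx n V \<notin> U" using j UV by blast
    have VM: "V \<subseteq> MM (idx n V)" using sub_M[OF V j(2)] .
    have e: "PO U V (PO V (MM (idx n V)) (fst Y (MM (idx n V)))) = PO U (MM (idx n V)) (fst Y (MM (idx n V)))"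
      using POt[OF U V MB[OF j(1)] UV VM] goodD(1)[OF Y goodD(5)[OF Y MJ[OF j(1)]]] by blast
    show "snd (GO Y) U V \<in> Hom (Phi U) (PO U V (fst (GO Y) V)) (fst (GO Y) U)"
      unfolding GO_def using U V UV e tau_hom[OF Y k2 U i(1) j(1) i(2) jU] by simp
  next
    fix U V W assume U: "U \<in> BB" and V: "V \<in> BB" and W: "W \<in> BB" and UVW: "U \<subseteq> V \<and> V \<subseteq> W"
    have i: "idx n U \<in> {1..n}" "idx n U \<notin> U" using idx[OF U] by auto
    have j: "idx n V \<in> {1..n}" "idx n V \<notin> V" using idx[OF V] by auto
    have l: "idx n W \<in> {1..n}" "idx n W \<notin> W" using idx[OF W] by auto
    have jU: "idx n V \<notin> U" using j UVW by blast
    have lU: "idx n W \<notin> U" using l UVW by blast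
    have lV: "idx n W \<notin> V" using l UVW by blast
    have "tau Y U (idx n U) (idx n W) = Comp (Phi U) (tau Y U (idx n U) (idx n V)) (tau Y U (idx n V) (idx n W))"
      using tau_cocycle[OF Y k3 U i(1) j(1) l(1) i(2) jU lU] by simp
    also have "\<dots> = Comp (Phi U) (tau Y U (idx n U) (idx n V)) (PM U V (tau Y V (idx n V) (idx n W)))"
      using tau_restr[OF Y k2 U V _ j(1) l(1) j(2) lV] UVW by simp
    finally show "snd (GO Y) U W = Comp (Phi U) (snd (GO Y) U V) (PM U V (snd (GO Y) V W))"
      unfolding GO_def using U V W UVW by auto
  qed
  then show ?thesis using Ob_tl by blast
qed

lemma GM_hom: assumes k3: "k + 3 \<le> n" and h: "h \<in> Hom (twolim I Phi PO PM) Y Y'" and I: "JJ \<subseteq> I" "I \<subseteq> BB"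
  shows "GM h \<in> Hom (twolim BB Phi PO PM) (GO Y) (GO Y')"
proof -
  have k2: "k + 2 \<le> n" using k3 by simp
  have gY: "good I Y" using HomD(1)[OF h] I unfolding good_def by blast
  have gY': "good I Y'" using HomD(2)[OF h] I unfolding good_def by blast
  show ?thesis
  proof (rule HomI[OF GO_ob[OF k3 gY] GO_ob[OF k3 gY']])
    fix U assume U: "U \<in> BB"
    have i: "idx n U \<in> {1..n}" "idx n U \<notin> U" using idx[OF U] by auto
    have "h (MM (idx n U)) \<in> Hom (Phi (MM (idx n U))) (fst Y (MM (idx n U))) (fst Y' (MM (idx n U)))"
      using HomD(3)[OF h goodD(5)[OF gY MJ[OF i(1)]]] .
    then show "GM h U \<in> Hom (Phi U) (fst (GO Y) U) (fst (GO Y') U)"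
      unfolding GM_def GO_def using U fun_hom[OF F[OF U MB[OF i(1)] sub_M[OF U i(2)]]] by simp
  next
    fix U assume "U \<notin> BB" then show "GM h U = undefined" unfolding GM_def by simp
  next
    fix U W assume U: "U \<in> BB" and W: "W \<in> BB" and UW: "U \<subseteq> W"
    have i: "idx n U \<in> {1..n}" "idx n U \<notin> U" using idx[OF U] by auto
    have j: "idx n W \<in> {1..n}" "idx n W \<notin> W" using idx[OF W] by auto
    have jU: "idx n W \<notin> U" using j UW by blast
    have hj: "h (MM (idx n W)) \<in> Hom (Phi (MM (idx n W))) (fst Y (MM (idx n W))) (fst Y' (MM (idx n W)))"
      using HomD(3)[OF h goodD(5)[OF gY MJ[OF j(1)]]] .
    have p: "PM U W (PM W (MM (idx n W)) (h (MM (idx n W)))) = PM U (MM (idx n W)) (h (MM (idx n W)))"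
      using PMt[OF U W MB[OF j(1)] UW sub_M[OF W j(2)] hj] .
    show "Comp (Phi U) (GM h U) (snd (GO Y) U W) = Comp (Phi U) (snd (GO Y') U W) (PM U W (GM h W))"
      unfolding GM_def GO_def using U W UW p tau_nat[OF gY gY' h k2 U i(1) j(1) i(2) jU] by simp
  qed
qed

lemma GO_functor: assumes k3: "k + 3 \<le> n"
  shows "is_functor (twolim JJ Phi PO PM) (twolim BB Phi PO PM) GO GM"
  unfolding is_functor_def
proof (intro conjI ballI allI impI)
  fix Y assume Y: "Y \<in> Ob (twolim JJ Phi PO PM)"
  show "GO Y \<in> Ob (twolim BB Phi PO PM)" using GO_ob[OF k3 good_D[OF Y]] .
  show "GM (Id (twolim JJ Phi PO PM) Y) = Id (twolim BB Phi PO PM) (GO Y)"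
  proof (rule ext)
    fix U show "GM (Id (twolim JJ Phi PO PM) Y) U = Id (twolim BB Phi PO PM) (GO Y) U"
    proof (cases "U \<in> BB")
      case True
      have i: "idx n U \<in> {1..n}" "idx n U \<notin> U" using idx[OF True] by auto
      show ?thesis unfolding GM_def GO_def Id_tl
        using True MJ[OF i(1)] fun_id[OF F[OF True MB[OF i(1)] sub_M[OF True i(2)]] goodD(1)[OF good_D[OF Y] MJ[OF i(1)]]]
        by simp
    qed (simp add: GM_def Id_tl)
  qed
next
  fix Y Y' h assume h: "h \<in> Hom (twolim JJ Phi PO PM) Y Y'"
  show "GM h \<in> Hom (twolim BB Phi PO PM) (GO Y) (GO Y')" using GM_hom[OF k3 h] JB by blast
next
  fix X Y Z f g assume fg: "f \<in> Hom (twolim JJ Phi PO PM) X Y \<and> g \<in> Hom (twolim JJ Phi PO PM) Y Z"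
  hence f: "f \<in> Hom (twolim JJ Phi PO PM) X Y" and g: "g \<in> Hom (twolim JJ Phi PO PM) Y Z" by auto
  show "GM (Comp (twolim JJ Phi PO PM) g f) = Comp (twolim BB Phi PO PM) (GM g) (GM f)"
  proof (rule ext)
    fix U show "GM (Comp (twolim JJ Phi PO PM) g f) U = Comp (twolim BB Phi PO PM) (GM g) (GM f) U"
    proof (cases "U \<in> BB")
      case True
      have i: "idx n U \<in> {1..n}" "idx n U \<notin> U" using idx[OF True] by auto
      show ?thesis unfolding GM_def Comp_tl
        using True MJ[OF i(1)] fun_comp[OF F[OF True MB[OF i(1)] sub_M[OF True i(2)]] HomD(3)[OF f MJ[OF i(1)]] HomD(3)[OF g MJ[OF i(1)]]]
        by simp
    qed (simp add: GM_def Comp_tl)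
  qed
qed

lemma eps_hom: assumes k3: "k + 3 \<le> n" and Y: "Y \<in> Ob (twolim JJ Phi PO PM)"
  shows "eps Y \<in> Hom (twolim JJ Phi PO PM) (resO JJ (GO Y)) Y"
proof -
  have k2: "k + 2 \<le> n" using k3 by simp
  have gY: "good JJ Y" using good_D[OF Y] .
  show ?thesis
  proof (rule HomI[OF res_ob[OF gd JB GO_ob[OF k3 gY]] Y])
    fix U assume U: "U \<in> JJ"
    have UB: "U \<in> BB" using JsB[OF U] .
    have i: "idx n U \<in> {1..n}" "idx n U \<notin> U" using idx[OF UB] by auto
    show "eps Y U \<in> Hom (Phi U) (fst (resO JJ (GO Y)) U) (fst Y U)"
      unfolding eps_def fst_resO GO_def using U UB goodD(2)[OF gY U MJ[OF i(1)] sub_M[OF UB i(2)]] by simp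
  next
    fix U assume "U \<notin> JJ" then show "eps Y U = undefined" unfolding eps_def by simp
  next
    fix U W assume U: "U \<in> JJ" and W: "W \<in> JJ" and UW: "U \<subseteq> W"
    show "Comp (Phi U) (eps Y U) (snd (resO JJ (GO Y)) U W) = Comp (Phi U) (snd Y U W) (PM U W (eps Y W))"
      unfolding eps_def snd_resO GO_def using U W UW JsB[OF U] JsB[OF W] R1[OF gY k2 U W UW] by simp
  qed
qed

lemma th_hom: assumes k3: "k + 3 \<le> n" and X: "X \<in> Ob (twolim BB Phi PO PM)"
  shows "th X \<in> Hom (twolim BB Phi PO PM) (GO (resO JJ X)) X"
proof -
  have k2: "k + 2 \<le> n" using k3 by simp
  have gX: "good BB X" using good_C[OF X] .
  show ?thesis
  proof (rule HomI[OF GO_ob[OF k3 good_res[OF X]] X])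
    fix U assume U: "U \<in> BB"
    have i: "idx n U \<in> {1..n}" "idx n U \<notin> U" using idx[OF U] by auto
    show "th X U \<in> Hom (Phi U) (fst (GO (resO JJ X)) U) (fst X U)"
      unfolding th_def fst_resO GO_def using U MJ[OF i(1)] goodD(2)[OF gX U MB[OF i(1)] sub_M[OF U i(2)]] by simp
  next
    fix U assume "U \<notin> BB" then show "th X U = undefined" unfolding th_def by simp
  next
    fix U W assume U: "U \<in> BB" and W: "W \<in> BB" and UW: "U \<subseteq> W"
    have i: "idx n U \<in> {1..n}" using idx[OF U] by auto
    have j: "idx n W \<in> {1..n}" using idx[OF W] by auto
    show "Comp (Phi U) (th X U) (snd (GO (resO JJ X)) U W) = Comp (Phi U) (snd X U W) (PM U W (th X W))"
      unfolding th_def GO_def using U W UW R1[OF gX k2 U W UW] tau_res[OF k2 i j] by simp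
  qed
qed

lemma th_nat: assumes f: "f \<in> Hom (twolim BB Phi PO PM) X Y"
  shows "Comp (twolim BB Phi PO PM) (th Y) (GM (resM JJ f)) = Comp (twolim BB Phi PO PM) f (th X)"
proof (rule ext)
  fix U show "Comp (twolim BB Phi PO PM) (th Y) (GM (resM JJ f)) U = Comp (twolim BB Phi PO PM) f (th X) U"
  proof (cases "U \<in> BB")
    case True
    have i: "idx n U \<in> {1..n}" "idx n U \<notin> U" using idx[OF True] by auto
    show ?thesis unfolding Comp_tl th_def GM_def resM_def
      using True MJ[OF i(1)] HomD(5)[OF f True MB[OF i(1)] sub_M[OF True i(2)]] by simp
  qed (simp add: Comp_tl)
qed

lemma eps_nat: assumes f: "f \<in> Hom (twolim JJ Phi PO PM) X Y"
  shows "Comp (twolim JJ Phi PO PM) (eps Y) (resM JJ (GM f)) = Comp (twolim JJ Phi PO PM) f (eps X)"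
proof (rule ext)
  fix U show "Comp (twolim JJ Phi PO PM) (eps Y) (resM JJ (GM f)) U = Comp (twolim JJ Phi PO PM) f (eps X) U"
  proof (cases "U \<in> JJ")
    case True
    have UB: "U \<in> BB" using JsB[OF True] .
    have i: "idx n U \<in> {1..n}" "idx n U \<notin> U" using idx[OF UB] by auto
    show ?thesis unfolding Comp_tl eps_def GM_def resM_def
      using True UB HomD(5)[OF f True MJ[OF i(1)] sub_M[OF UB i(2)]] by simp
  qed (simp add: Comp_tl)
qed

lemma equiv_thm: assumes k3: "k + 3 \<le> n"
  shows "equivalence (twolim BB Phi PO PM) (twolim JJ Phi PO PM) (resO JJ) (resM JJ)"
proof -
  let ?C = "twolim BB Phi PO PM" and ?D = "twolim JJ Phi PO PM"
  have RF: "is_functor ?C ?D (resO JJ) (resM JJ)" using res_functor[OF gd JB] .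
  have GF: "is_functor ?D ?C GO GM" using GO_functor[OF k3] .
  have GC: "groupoid ?C" using groupoid_tl[OF gd] .
  have GD: "groupoid ?D" using groupoid_tl[OF gd_sub[OF gd JB]] .
  define eta where "eta X = ginv ?C (GO (resO JJ X)) X (th X)" for X
  have n1: "nat_iso ?C ?C id id (GO \<circ> resO JJ) (GM \<circ> resM JJ) eta"
    unfolding nat_iso_def
  proof (intro conjI ballI allI impI)
    fix X assume X: "X \<in> Ob ?C"
    show "iso ?C (id X) ((GO \<circ> resO JJ) X) (eta X)"
      unfolding eta_def using ginv_iso[OF GC th_hom[OF k3 X]] by simp
  next
    fix X Y f assume f: "f \<in> Hom ?C X Y"
    have p: "GM (resM JJ f) \<in> Hom ?C (GO (resO JJ X)) (GO (resO JJ Y))"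
      using fun_hom[OF GF fun_hom[OF RF f]] .
    have "Comp ?C (ginv ?C (GO (resO JJ Y)) Y (th Y)) f = Comp ?C (GM (resM JJ f)) (ginv ?C (GO (resO JJ X)) X (th X))"
      using square_inv[OF GC p th_hom[OF k3 HomD(1)[OF f]] f th_hom[OF k3 HomD(2)[OF f]] th_nat[OF f]] .
    then show "Comp ?C (eta Y) (id f) = Comp ?C ((GM \<circ> resM JJ) f) (eta X)" unfolding eta_def by simp
  qed
  have n2: "nat_iso ?D ?D (resO JJ \<circ> GO) (resM JJ \<circ> GM) id id eps"
    unfolding nat_iso_def
  proof (intro conjI ballI allI impI)
    fix Y assume Y: "Y \<in> Ob ?D"
    show "iso ?D ((resO JJ \<circ> GO) Y) (id Y) (eps Y)" using gpd_iso[OF GD eps_hom[OF k3 Y]] by simp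
  next
    fix X Y f assume f: "f \<in> Hom ?D X Y"
    show "Comp ?D (eps Y) ((resM JJ \<circ> GM) f) = Comp ?D (id f) (eps X)" using eps_nat[OF f] by simp
  qed
  show ?thesis unfolding equivalence_def using RF GF n1 n2 by blast
qed

end

theorem proposition5p1:
  fixes n k :: nat
    and Phi :: "nat set \<Rightarrow> ('o,'m) gcat"
    and PO :: "nat set \<Rightarrow> nat set \<Rightarrow> 'o \<Rightarrow> 'o"
    and PM :: "nat set \<Rightarrow> nat set \<Rightarrow> 'm \<Rightarrow> 'm"
  assumes "k < n"
    and "gpd_diagram (Bposet n) Phi PO PM"
  shows "faithful (twolim (Bposet n) Phi PO PM) (twolim (Bposet_k n k) Phi PO PM)
           (resO (Bposet_k n k)) (resM (Bposet_k n k)) \<and>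
         (k + 2 \<le> n \<longrightarrow>
           full (twolim (Bposet n) Phi PO PM) (twolim (Bposet_k n k) Phi PO PM)
             (resO (Bposet_k n k)) (resM (Bposet_k n k)) \<and>
           faithful (twolim (Bposet n) Phi PO PM) (twolim (Bposet_k n k) Phi PO PM)
             (resO (Bposet_k n k)) (resM (Bposet_k n k))) \<and>
         (k + 3 \<le> n \<longrightarrow>
           equivalence (twolim (Bposet n) Phi PO PM) (twolim (Bposet_k n k) Phi PO PM)
             (resO (Bposet_k n k)) (resM (Bposet_k n k)))"
proof -
  interpret P: P51 n k Phi PO PM using assms by unfold_locales
  have a: "faithful (twolim (Bposet n) Phi PO PM) (twolim (Bposet_k n k) Phi PO PM)
           (resO (Bposet_k n k)) (resM (Bposet_k n k))" using P.faithful_thm .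
  have b: "k + 2 \<le> n \<longrightarrow> full (twolim (Bposet n) Phi PO PM) (twolim (Bposet_k n k) Phi PO PM)
             (resO (Bposet_k n k)) (resM (Bposet_k n k))" using P.full_thm by blast
  have c: "k + 3 \<le> n \<longrightarrow> equivalence (twolim (Bposet n) Phi PO PM) (twolim (Bposet_k n k) Phi PO PM)
             (resO (Bposet_k n k)) (resM (Bposet_k n k))" using P.equiv_thm by blast
  show ?thesis using a b c by (intro conjI impI) auto
qed

end
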